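(* Let $X$ be a real-valued Lévy process and $\alpha>0$ such that $Ee^{\alpha X_1}=1$ and $E(X_1e^{\alpha X_1})<\infty$. Let $B(T)=\int_{[0,T)}e^{\psi(\alpha)(T-t)}Ee^{\alpha\overline X_t}\,dt$, where $\psi(\alpha)=\ln Ee^{\alpha X_1}$ and $\overline X_t=\sup_{s\le t}X_s$. Then for every fixed $t\ge0$, $$\lim_{T\to\infty}\frac{B(T-t)}{B(T)}=1.$$ *)

theory Defs
  imports "HOL-Probability.Probability"
begin

text \<open>A real-valued Levy process on the probability space M, indexed by times t \<ge> 0:
  measurable coordinates, X 0 = 0, independent increments, stationary increments,
  and cadlag sample paths (we take the standard cadlag version, so paths are cadlag
  for every sample point).\<close>

definition levy_process :: "'a measure \<Rightarrow> (real \<Rightarrow> 'a \<Rightarrow> real) \<Rightarrow> bool" where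
  "levy_process M X \<longleftrightarrow>
     prob_space M \<and>
     (\<forall>t\<ge>0. X t \<in> borel_measurable M) \<and>
     (\<forall>\<omega>\<in>space M. X 0 \<omega> = 0) \<and>
     (\<forall>(ts :: nat \<Rightarrow> real) n. 0 \<le> ts 0 \<and> (\<forall>i<n. ts i \<le> ts (Suc i)) \<longrightarrow>
        prob_space.indep_vars M (\<lambda>_. borel) (\<lambda>i \<omega>. X (ts (Suc i)) \<omega> - X (ts i) \<omega>) {..<n}) \<and>
     (\<forall>s t. 0 \<le> s \<longrightarrow> 0 \<le> t \<longrightarrow>
        distr M borel (\<lambda>\<omega>. X (s + t) \<omega> - X s \<omega>) = distr M borel (X t)) \<and>
     (\<forall>\<omega>\<in>space M. \<forall>t\<ge>0.
        continuous (at_right t) (\<lambda>s. X s \<omega>) \<and>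
        (0 < t \<longrightarrow> (\<exists>l. ((\<lambda>s. X s \<omega>) \<longlongrightarrow> l) (at_left t))))"

definition running_sup :: "(real \<Rightarrow> 'a \<Rightarrow> real) \<Rightarrow> real \<Rightarrow> 'a \<Rightarrow> real" where
  "running_sup X t \<omega> = Sup ((\<lambda>s. X s \<omega>) ` {0..t})"

definition levy_psi :: "'a measure \<Rightarrow> (real \<Rightarrow> 'a \<Rightarrow> real) \<Rightarrow> real \<Rightarrow> real" where
  "levy_psi M X a = ln (integral\<^sup>L M (\<lambda>\<omega>. exp (a * X 1 \<omega>)))"

definition levy_B :: "'a measure \<Rightarrow> (real \<Rightarrow> 'a \<Rightarrow> real) \<Rightarrow> real \<Rightarrow> real \<Rightarrow> real" where
  "levy_B M X a T = (LINT t:{0..<T}|lborel.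
      exp (levy_psi M X a * (T - t)) * integral\<^sup>L M (\<lambda>\<omega>. exp (a * running_sup X t \<omega>)))"

end

theory Submission
  imports Defs "HOL-Analysis.Harmonic_Numbers"
begin

primrec runmax :: "(nat \<Rightarrow> real) \<Rightarrow> nat \<Rightarrow> real" where
  "runmax f 0 = f 0"
| "runmax f (Suc k) = max (runmax f k) (f (Suc k))"

lemma runmax_ge: "j \<le> k \<Longrightarrow> f j \<le> runmax f k"
proof (induction k)
  case (Suc k)
  then show ?case
  proof (cases "j = Suc k")
    case False
    then have "j \<le> k" using Suc by auto
    then show ?thesis using Suc by (simp add: max.coboundedI1)
  qed simp
qed simp

lemma runmax_attained: "\<exists>j\<le>k. runmax f k = f j"
  by (induction k) (auto simp: max_def le_Suc_eq intro: le_SucI)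

lemma runmax_le: "(\<And>j. j \<le> k \<Longrightarrow> f j \<le> B) \<Longrightarrow> runmax f k \<le> B"
  using runmax_attained[of k f] by auto

lemma runmax_mono: "(\<And>j. j \<le> k \<Longrightarrow> f j \<le> g j) \<Longrightarrow> runmax f k \<le> runmax g k"
proof (induction k)
  case (Suc k)
  have a: "runmax f k \<le> runmax g k" using Suc by auto
  have b: "f (Suc k) \<le> g (Suc k)" using Suc by auto
  show ?case unfolding runmax.simps by (rule max.mono[OF a b])
qed simp

lemma runmax_cong: "(\<And>j. j \<le> k \<Longrightarrow> f j = g j) \<Longrightarrow> runmax f k = runmax g k"
  by (induction k) auto

lemma exp_max: "a \<ge> 0 \<Longrightarrow> exp (a * max u v) = max (exp (a * u)) (exp (a * v::real))"
proof (cases "u \<le> v")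
  case True
  assume a: "a \<ge> 0"
  then have "a * u \<le> a * v" using True by (intro mult_left_mono) auto
  then show ?thesis using True by (simp add: max_def)
next
  case False
  assume a: "a \<ge> 0"
  then have "a * v \<le> a * u" using False by (intro mult_left_mono) auto
  then show ?thesis using False by (simp add: max_def)
qed

lemma runmax_exp: "exp (a * runmax f k) = runmax (\<lambda>j. exp (a * f j)) k" if "a \<ge> 0"
  using that by (induction k) (auto simp: exp_max)

lemma measurable_runmax[measurable]:
  assumes "\<And>j. j \<le> k \<Longrightarrow> (\<lambda>x. f j x) \<in> borel_measurable N"
  shows "(\<lambda>x. runmax (\<lambda>j. f j x) k) \<in> borel_measurable N"
  using assms by (induction k) auto

locale levy_ctx =
  fixes M :: "'a measure" and X :: "real \<Rightarrow> 'a \<Rightarrow> real" and \<alpha> :: real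
  assumes lp: "levy_process M X" and apos: "\<alpha> > 0"
    and int1: "integrable M (\<lambda>\<omega>. exp (\<alpha> * X 1 \<omega>))"
    and E1: "integral\<^sup>L M (\<lambda>\<omega>. exp (\<alpha> * X 1 \<omega>)) = 1"
    and intX: "integrable M (\<lambda>\<omega>. X 1 \<omega> * exp (\<alpha> * X 1 \<omega>))"
begin

lemmas lpc = lp[unfolded levy_process_def]

sublocale prob_space M using lpc by (rule conjunct1)

lemma Xmeas: "t \<ge> 0 \<Longrightarrow> X t \<in> borel_measurable M"
  using lpc[THEN conjunct2, THEN conjunct1] by simp

lemma X0: "\<omega> \<in> space M \<Longrightarrow> X 0 \<omega> = 0"
  using lpc[THEN conjunct2, THEN conjunct2, THEN conjunct1] by simp

lemma lp_indep: "0 \<le> ts 0 \<Longrightarrow> (\<forall>i<n. ts i \<le> ts (Suc i)) \<Longrightarrow>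
    indep_vars (\<lambda>_. borel) (\<lambda>i \<omega>. X (ts (Suc i)) \<omega> - X (ts i) \<omega>) {..<n}"
  using lpc[THEN conjunct2, THEN conjunct2, THEN conjunct2, THEN conjunct1] by simp

lemma incr_distr: "s \<ge> 0 \<Longrightarrow> t \<ge> 0 \<Longrightarrow> distr M borel (\<lambda>\<omega>. X (s + t) \<omega> - X s \<omega>) = distr M borel (X t)"
  using lpc[THEN conjunct2, THEN conjunct2, THEN conjunct2, THEN conjunct2, THEN conjunct1] by simp

lemma cadlag: "\<omega> \<in> space M \<Longrightarrow> t \<ge> 0 \<Longrightarrow> continuous (at_right t) (\<lambda>s. X s \<omega>) \<and>
        (0 < t \<longrightarrow> (\<exists>l. ((\<lambda>s. X s \<omega>) \<longlongrightarrow> l) (at_left t)))"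
  using lpc[THEN conjunct2, THEN conjunct2, THEN conjunct2, THEN conjunct2, THEN conjunct2] by simp

definition D :: "real \<Rightarrow> real \<Rightarrow> nat \<Rightarrow> 'a \<Rightarrow> real" where
  "D c h i \<omega> = X (c + real (Suc i) * h) \<omega> - X (c + real i * h) \<omega>"

lemma D_meas[measurable]: "c \<ge> 0 \<Longrightarrow> h \<ge> 0 \<Longrightarrow> D c h i \<in> borel_measurable M"
  unfolding D_def by (intro borel_measurable_diff Xmeas) auto

lemma D_indep: "c \<ge> 0 \<Longrightarrow> h \<ge> 0 \<Longrightarrow> indep_vars (\<lambda>_. borel) (D c h) {..<m}"
proof -
  assume c: "c \<ge> 0" and h: "h \<ge> 0"
  have "real i * h \<le> real (Suc i) * h" for i using h by (intro mult_right_mono) auto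
  then have "\<forall>i<m. c + real i * h \<le> c + real (Suc i) * h" by simp
  from lp_indep[of "\<lambda>i. c + real i * h", OF _ this] c
  show ?thesis unfolding D_def[abs_def] by simp
qed

lemma D_distr: "c \<ge> 0 \<Longrightarrow> h \<ge> 0 \<Longrightarrow> distr M borel (D c h i) = distr M borel (X h)"
proof -
  assume c: "c \<ge> 0" and h: "h \<ge> 0"
  have "distr M borel (\<lambda>\<omega>. X ((c + real i * h) + h) \<omega> - X (c + real i * h) \<omega>) = distr M borel (X h)"
    using c h by (intro incr_distr) auto
  moreover have eq: "c + real (Suc i) * h = (c + real i * h) + h" by (simp add: distrib_right)
  ultimately show ?thesis unfolding D_def[abs_def] by (simp only: eq)
qed

lemma D_sum: "X (c + real k * h) \<omega> - X c \<omega> = (\<Sum>i<k. D c h i \<omega>)"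
  by (induction k) (auto simp: D_def)

end

lemma ln_le_div_e: "(y::real) > 0 \<Longrightarrow> ln y \<le> y * exp (-1)"
proof -
  assume y: "y > 0"
  have "ln (y * exp (-1)) \<le> y * exp (-1) - 1" using y by (intro ln_le_minus_one) auto
  then show ?thesis using y by (simp add: ln_mult)
qed

lemma alog_le: "(a::real) > 0 \<Longrightarrow> c > 0 \<Longrightarrow> a * ln c - a * ln a \<le> c * exp (-1)"
proof -
  assume a: "a > 0" and c: "c > 0"
  have "ln (c / a) \<le> (c / a) * exp (-1)" using a c by (intro ln_le_div_e) auto
  then have "a * ln (c / a) \<le> a * ((c / a) * exp (-1))" using a by (intro mult_left_mono) auto
  then show ?thesis using a c by (simp add: ln_div algebra_simps)
qed

lemma alog_ge: "0 < (b::real) \<Longrightarrow> b \<le> a \<Longrightarrow> a - b \<le> a * (ln a - ln b)"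
proof -
  assume b: "0 < b" and ba: "b \<le> a"
  have "ln (b / a) \<le> b / a - 1" using b ba by (intro ln_le_minus_one) auto
  then have "a * ln (b / a) \<le> a * (b / a - 1)" using b ba by (intro mult_left_mono) auto
  then show ?thesis using b ba by (simp add: ln_div algebra_simps)
qed

lemma le_exp_iff_ln: "0 < (a::real) \<Longrightarrow> a \<le> exp L \<longleftrightarrow> ln a \<le> L"
proof -
  assume a: "0 < a"
  have "a \<le> exp L \<longleftrightarrow> ln a \<le> ln (exp L)" using ln_le_cancel_iff[of a "exp L"] a by simp
  then show ?thesis by simp
qed

lemma lt_exp_iff_ln: "0 < (a::real) \<Longrightarrow> exp L < a \<longleftrightarrow> L < ln a"
proof -
  assume a: "0 < a"
  have "exp L < a \<longleftrightarrow> ln (exp L) < ln a" using ln_less_cancel_iff[of "exp L" a] a by simp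
  then show ?thesis by simp
qed

lemma two_pt:
  fixes a b L :: real
  assumes b: "0 < b" "b \<le> a" and L: "L \<ge> 0"
  shows "min a (exp L) - min b (exp L) \<le> a * (min (ln a) L - min (ln b) L)"
proof (cases "ln a \<le> L")
  case True
  have "ln b \<le> ln a" using b by (subst ln_le_cancel_iff) auto
  then have "ln b \<le> L" using True by simp
  have "a \<le> exp L" using True b le_exp_iff_ln[of a L] by simp
  moreover have "b \<le> exp L" using b \<open>a \<le> exp L\<close> by simp
  ultimately show ?thesis using True \<open>ln b \<le> L\<close> alog_ge[OF b] by simp
next
  case False
  then have aK: "exp L < a" using b lt_exp_iff_ln[of a L] by simp
  show ?thesis
  proof (cases "ln b \<le> L")
    case True
    then have bK: "b \<le> exp L" using b le_exp_iff_ln[of b L] by simp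
    have "exp L - b \<le> exp L * (ln (exp L) - ln b)" using alog_ge[OF b(1) bK] .
    also have "\<dots> = exp L * (L - ln b)" by simp
    also have "\<dots> \<le> a * (L - ln b)" using aK True by (intro mult_right_mono) auto
    finally show ?thesis using False True aK bK by simp
  next
    case False
    then have "exp L < b" using b lt_exp_iff_ln[of b L] by simp
    then show ?thesis using False \<open>\<not> ln a \<le> L\<close> aK by simp
  qed
qed

lemma path_core:
  fixes x :: "nat \<Rightarrow> real" and L :: real
  assumes pos: "\<And>k. x k > 0" and x0: "x 0 = 1" and L: "L \<ge> 0"
  shows "min (runmax x N) (exp L) - 1 \<le> x N * min (ln (runmax x N)) L
           - (\<Sum>t<N. min (ln (runmax x t)) L * (x (Suc t) - x t))"
proof (induction N)
  case 0
  then show ?case using x0 L by simp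
next
  case (Suc N)
  let ?\<phi> = "\<lambda>k. min (ln (runmax x k)) L"
  have b0: "0 < runmax x N" using pos runmax_ge[of 0 N x] x0 by simp
  have key: "min (runmax x (Suc N)) (exp L) - min (runmax x N) (exp L)
      \<le> x (Suc N) * (?\<phi> (Suc N) - ?\<phi> N)"
  proof (cases "x (Suc N) \<le> runmax x N")
    case True
    then show ?thesis by (simp add: max_def)
  next
    case False
    then have "runmax x (Suc N) = x (Suc N)" by simp
    then show ?thesis using two_pt[OF b0 _ L, of "x (Suc N)"] False by simp
  qed
  have e1: "(\<Sum>t<Suc N. ?\<phi> t * (x (Suc t) - x t)) = (\<Sum>t<N. ?\<phi> t * (x (Suc t) - x t)) + ?\<phi> N * (x (Suc N) - x N)"
    by (simp only: sum.lessThan_Suc)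
  have e2: "x (Suc N) * (?\<phi> (Suc N) - ?\<phi> N) = x (Suc N) * ?\<phi> (Suc N) - x (Suc N) * ?\<phi> N"
    by (simp only: right_diff_distrib)
  have e3: "?\<phi> N * (x (Suc N) - x N) = x (Suc N) * ?\<phi> N - x N * ?\<phi> N"
    by (simp add: algebra_simps)
  show ?case using Suc.IH key e1 e2 e3 by linarith
qed

lemma lin_aux: "(A::real) - 1 \<le> P - Sg \<Longrightarrow> P \<le> Q + A * e \<Longrightarrow> (1 - e) * A \<le> 1 + Q - Sg"
proof -
  assume a: "A - 1 \<le> P - Sg" and b: "P \<le> Q + A * e"
  have "(1 - e) * A = A - A * e" by (simp add: algebra_simps)
  then show ?thesis using a b by linarith
qed

lemma path_ineq:
  fixes x :: "nat \<Rightarrow> real" and L :: real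
  assumes pos: "\<And>k. x k > 0" and x0: "x 0 = 1" and L: "L \<ge> 0"
  shows "(1 - exp (-1)) * min (runmax x N) (exp L) \<le> 1 + x N * max (ln (x N)) 0
           - (\<Sum>t<N. min (ln (runmax x t)) L * (x (Suc t) - x t))"
proof -
  define a where "a = x N"
  define b where "b = runmax x N"
  have a: "a > 0" using pos a_def by simp
  have ab: "a \<le> b" unfolding a_def b_def by (rule runmax_ge) simp
  have b1: "1 \<le> b" unfolding b_def using runmax_ge[of 0 N x] x0 by simp
  have main: "a * min (ln b) L \<le> a * max (ln a) 0 + min b (exp L) * exp (-1)"
  proof (cases "ln b \<le> L")
    case True
    then have "b \<le> exp L" using b1 le_exp_iff_ln[of b L] by simp
    have "a * ln b \<le> a * ln a + b * exp (-1)" using alog_le[OF a, of b] a b1 by simp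
    also have "a * ln a \<le> a * max (ln a) 0" using a by (intro mult_left_mono) auto
    finally show ?thesis using True \<open>b \<le> exp L\<close> by simp
  next
    case False
    then have bK: "exp L < b" using b1 lt_exp_iff_ln[of b L] by simp
    show ?thesis
    proof (cases "exp L \<le> a")
      case True
      then have "L \<le> ln a" using a ln_le_cancel_iff[of "exp L" a] by simp
      then have "a * L \<le> a * max (ln a) 0" using a by (intro mult_left_mono) auto
      moreover have "0 \<le> exp L * exp (-1)" by simp
      ultimately have "a * L \<le> a * max (ln a) 0 + exp L * exp (-1)" by linarith
      then show ?thesis using False bK by simp
    next
      case aK: False
      have "a * ln (exp L) \<le> a * ln a + exp L * exp (-1)" using alog_le[OF a, of "exp L"] by simp
      also have "a * ln a \<le> a * max (ln a) 0" using a by (intro mult_left_mono) auto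
      finally show ?thesis using False bK by simp
    qed
  qed
  define Sg where "Sg = (\<Sum>t<N. min (ln (runmax x t)) L * (x (Suc t) - x t))"
  have h1: "min b (exp L) - 1 \<le> a * min (ln b) L - Sg"
    using path_core[of x L N, OF pos x0 L] unfolding a_def b_def Sg_def .
  have "(1 - exp (-1)) * min b (exp L) \<le> 1 + a * max (ln a) 0 - Sg" by (rule lin_aux[OF h1 main])
  then show ?thesis by (simp only: a_def b_def Sg_def)
qed

lemma ennreal_pow_eq_1:
  fixes c :: ennreal assumes "c ^ K = 1" "K > 0" shows "c = 1"
proof -
  have "c \<noteq> top" using assms by (auto simp: power_eq_top_ennreal)
  then obtain r where r: "c = ennreal r" "r \<ge> 0" by (cases c) auto
  then have "ennreal (r ^ K) = 1" using assms(1) by (simp add: ennreal_power)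
  then have "r ^ K = 1" using r by simp
  then have "r ^ K = 1 ^ K" by simp
  then have "r = 1" using power_eq_iff_eq_base[of K r 1] assms r by simp
  then show ?thesis using r by simp
qed

lemma meas_sum_pi:
  assumes "finite S" "\<And>i. i \<in> S \<Longrightarrow> g i \<in> I"
  shows "(\<lambda>v. \<Sum>i\<in>S. v (g i) :: real) \<in> borel_measurable (PiM I (\<lambda>_. borel))"
  using assms by (intro borel_measurable_sum) (auto intro: measurable_component_singleton)

context levy_ctx
begin

lemma step_exp:
  assumes K: "K > (0::nat)"
  shows "integrable M (\<lambda>\<omega>. exp (\<alpha> * X (1 / real K) \<omega>)) \<and>
         integral\<^sup>L M (\<lambda>\<omega>. exp (\<alpha> * X (1 / real K) \<omega>)) = 1"
proof -
  define h where "h = 1 / real K"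
  have h: "h \<ge> 0" by (simp add: h_def)
  have X1: "X 1 \<omega> = (\<Sum>i<K. D 0 h i \<omega>)" if "\<omega> \<in> space M" for \<omega>
    using D_sum[of 0 K h \<omega>] X0[OF that] K by (simp add: h_def)
  have E: "exp (\<alpha> * X 1 \<omega>) = (\<Prod>i<K. exp (\<alpha> * D 0 h i \<omega>))" if "\<omega> \<in> space M" for \<omega>
    using X1[OF that] by (simp add: sum_distrib_left exp_sum)
  have ind: "indep_vars (\<lambda>_. borel) (\<lambda>i \<omega>. exp (\<alpha> * D 0 h i \<omega>)) {..<K}"
    by (rule indep_vars_compose2[OF D_indep[OF _ h]]) auto
  have each: "(\<integral>\<^sup>+\<omega>. exp (\<alpha> * D 0 h i \<omega>) \<partial>M) = (\<integral>\<^sup>+\<omega>. exp (\<alpha> * X h \<omega>) \<partial>M)" for i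
  proof -
    have "(\<integral>\<^sup>+\<omega>. exp (\<alpha> * D 0 h i \<omega>) \<partial>M) = (\<integral>\<^sup>+x. exp (\<alpha> * x) \<partial>distr M borel (D 0 h i))"
      by (subst nn_integral_distr) (auto intro: D_meas h)
    also have "\<dots> = (\<integral>\<^sup>+x. exp (\<alpha> * x) \<partial>distr M borel (X h))" using D_distr[OF _ h] by simp
    also have "\<dots> = (\<integral>\<^sup>+\<omega>. exp (\<alpha> * X h \<omega>) \<partial>M)" by (subst nn_integral_distr) (auto intro: Xmeas h)
    finally show ?thesis .
  qed
  have one: "(\<integral>\<^sup>+\<omega>. exp (\<alpha> * X 1 \<omega>) \<partial>M) = ennreal 1"
    using nn_integral_eq_integral[OF int1] E1 by simp
  have "(\<integral>\<^sup>+\<omega>. exp (\<alpha> * X 1 \<omega>) \<partial>M) = (\<integral>\<^sup>+\<omega>. (\<Prod>i<K. exp (\<alpha> * D 0 h i \<omega>)) \<partial>M)"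
    by (rule nn_integral_cong) (simp add: E)
  also have "\<dots> = (\<Prod>i<K. \<integral>\<^sup>+\<omega>. exp (\<alpha> * D 0 h i \<omega>) \<partial>M)"
  proof -
    have ind': "indep_vars (\<lambda>_. borel) (\<lambda>i \<omega>. ennreal (exp (\<alpha> * D 0 h i \<omega>))) {..<K}"
      by (rule indep_vars_compose2[OF D_indep[OF _ h]]) auto
    have "(\<integral>\<^sup>+\<omega>. (\<Prod>i<K. exp (\<alpha> * D 0 h i \<omega>)) \<partial>M) = (\<integral>\<^sup>+\<omega>. (\<Prod>i<K. ennreal (exp (\<alpha> * D 0 h i \<omega>))) \<partial>M)"
      by (intro nn_integral_cong) (simp add: prod_ennreal)
    also have "\<dots> = (\<Prod>i<K. \<integral>\<^sup>+\<omega>. exp (\<alpha> * D 0 h i \<omega>) \<partial>M)"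
      using indep_vars_nn_integral[of "{..<K}" "\<lambda>i \<omega>. ennreal (exp (\<alpha> * D 0 h i \<omega>))"] ind' by simp
    finally show ?thesis .
  qed
  also have "\<dots> = (\<integral>\<^sup>+\<omega>. exp (\<alpha> * X h \<omega>) \<partial>M) ^ K" using each by simp
  finally have "(\<integral>\<^sup>+\<omega>. exp (\<alpha> * X h \<omega>) \<partial>M) ^ K = 1" using one by simp
  then have "(\<integral>\<^sup>+\<omega>. exp (\<alpha> * X h \<omega>) \<partial>M) = ennreal 1" using ennreal_pow_eq_1 K by simp
  then have "integrable M (\<lambda>\<omega>. exp (\<alpha> * X h \<omega>)) \<and> integral\<^sup>L M (\<lambda>\<omega>. exp (\<alpha> * X h \<omega>)) = 1"
  proof -
    have [measurable]: "X h \<in> borel_measurable M" by (rule Xmeas[OF h])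
    assume a: "(\<integral>\<^sup>+\<omega>. exp (\<alpha> * X h \<omega>) \<partial>M) = ennreal 1"
    show ?thesis using a by (subst (asm) nn_integral_eq_integrable) auto
  qed
  then show ?thesis by (simp add: h_def)
qed

lemma block_indep:
  assumes c: "c \<ge> 0" and h: "h \<ge> 0" and p: "p \<le> m"
    and F: "F \<in> borel_measurable (PiM {..<p} (\<lambda>_. borel))"
    and G: "G \<in> borel_measurable (PiM {p..<m} (\<lambda>_. borel))"
  shows "indep_var borel (\<lambda>\<omega>. F (\<lambda>i\<in>{..<p}. D c h i \<omega>)) borel (\<lambda>\<omega>. G (\<lambda>i\<in>{p..<m}. D c h i \<omega>))"
proof -
  have "indep_var (PiM {..<p} (\<lambda>_. borel)) (\<lambda>\<omega>. \<lambda>i\<in>{..<p}. D c h i \<omega>)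
                  (PiM {p..<m} (\<lambda>_. borel)) (\<lambda>\<omega>. \<lambda>i\<in>{p..<m}. D c h i \<omega>)"
  proof -
    have d: "{..<p} \<inter> {p..<m} = {}" by auto
    have s1: "{..<p} \<subseteq> {..<m}" using p by auto
    have s2: "{p..<m} \<subseteq> {..<m}" by auto
    show ?thesis using indep_var_restrict[OF D_indep[OF c h, of m] d s1 s2] .
  qed
  from indep_var_compose[OF this F G] show ?thesis by (simp add: comp_def)
qed

end

lemma meas_exp_comp:
  assumes [measurable]: "f \<in> borel_measurable N"
  shows "(\<lambda>x. exp (a * f x :: real)) \<in> borel_measurable N"
  by measurable

lemma meas_phi:
  assumes s: "\<And>j. j \<le> t \<Longrightarrow> s j \<in> borel_measurable N"
  shows "(\<lambda>x. min (ln (runmax (\<lambda>j. exp (a * s j x)) t)) L * exp (a * s t x)) \<in> borel_measurable N"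
proof -
  have [measurable]: "(\<lambda>x. runmax (\<lambda>j. exp (a * s j x)) t) \<in> borel_measurable N"
    by (rule measurable_runmax) (rule meas_exp_comp[OF s])
  have [measurable]: "s t \<in> borel_measurable N" using s by simp
  show ?thesis by measurable
qed

lemma meas_min_runmax:
  assumes s: "\<And>j. j \<le> t \<Longrightarrow> s j \<in> borel_measurable N"
  shows "(\<lambda>x. min (runmax (\<lambda>j. exp (a * s j x)) t) L) \<in> borel_measurable N"
proof -
  have [measurable]: "(\<lambda>x. runmax (\<lambda>j. exp (a * s j x)) t) \<in> borel_measurable N"
    by (rule measurable_runmax) (rule meas_exp_comp[OF s])
  show ?thesis by measurable
qed

context levy_ctx
begin

lemma distr_transfer:
  assumes eq: "distr M borel Y = distr M borel Z" and [measurable]: "Y \<in> borel_measurable M" "Z \<in> borel_measurable M"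
    and [measurable]: "g \<in> borel_measurable borel"
  shows "integrable M (\<lambda>\<omega>. g (Y \<omega>)) \<longleftrightarrow> integrable M (\<lambda>\<omega>. g (Z \<omega>) :: real)"
    and "integral\<^sup>L M (\<lambda>\<omega>. g (Y \<omega>)) = integral\<^sup>L M (\<lambda>\<omega>. g (Z \<omega>))"
proof -
  show "integrable M (\<lambda>\<omega>. g (Y \<omega>)) \<longleftrightarrow> integrable M (\<lambda>\<omega>. g (Z \<omega>))"
    using integrable_distr_eq[of Y M borel g] integrable_distr_eq[of Z M borel g] eq by simp
  show "integral\<^sup>L M (\<lambda>\<omega>. g (Y \<omega>)) = integral\<^sup>L M (\<lambda>\<omega>. g (Z \<omega>))"
    using integral_distr[of Y M borel g] integral_distr[of Z M borel g] eq by simp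
qed

definition S :: "real \<Rightarrow> real \<Rightarrow> nat \<Rightarrow> 'a \<Rightarrow> real" where
  "S c h j \<omega> = (\<Sum>i<j. D c h i \<omega>)"

lemma S_meas: "c \<ge> 0 \<Longrightarrow> h \<ge> 0 \<Longrightarrow> S c h j \<in> borel_measurable M"
  unfolding S_def[abs_def] by (intro borel_measurable_sum D_meas) auto

lemma S_Suc: "S c h (Suc j) \<omega> = S c h j \<omega> + D c h j \<omega>"
  by (simp add: S_def)

lemma S_X: "S c h j \<omega> = X (c + real j * h) \<omega> - X c \<omega>"
  by (simp add: S_def D_sum)

lemma D_exp:
  assumes c: "c \<ge> 0" and K: "K > 0" and h: "h = 1 / real K"
  shows "integrable M (\<lambda>\<omega>. exp (\<alpha> * D c h i \<omega>)) \<and> integral\<^sup>L M (\<lambda>\<omega>. exp (\<alpha> * D c h i \<omega>)) = 1"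
proof -
  have h0: "h \<ge> 0" using h by simp
  note tr = distr_transfer[OF D_distr[OF c h0, of i] D_meas[OF c h0] Xmeas[OF h0], of "\<lambda>x. exp (\<alpha> * x)"]
  show ?thesis using tr step_exp[OF K] h by simp
qed

lemma S_exp_int:
  assumes c: "c \<ge> 0" and K: "K > 0" and h: "h = 1 / real K"
  shows "integrable M (\<lambda>\<omega>. exp (\<alpha> * S c h j \<omega>))"
proof -
  have h0: "h \<ge> 0" using h by simp
  have "integrable M (\<lambda>\<omega>. \<Prod>i<j. exp (\<alpha> * D c h i \<omega>))"
    by (rule indep_vars_integrable[OF _ indep_vars_compose2[OF D_indep[OF c h0]]])
       (use D_exp[OF c K h] in auto)
  moreover have "exp (\<alpha> * S c h j \<omega>) = (\<Prod>i<j. exp (\<alpha> * D c h i \<omega>))" for \<omega>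
    by (simp add: S_def sum_distrib_left exp_sum)
  ultimately show ?thesis by simp
qed

lemma mart_zero:
  fixes t :: nat and L :: real
  assumes c: "c \<ge> 0" and K: "K > 0" and h: "h = 1 / real K"
  defines "\<phi> \<equiv> \<lambda>\<omega>. min (ln (runmax (\<lambda>j. exp (\<alpha> * S c h j \<omega>)) t)) L"
  assumes L: "L \<ge> 0"
  shows "integrable M (\<lambda>\<omega>. \<phi> \<omega> * (exp (\<alpha> * S c h (Suc t) \<omega>) - exp (\<alpha> * S c h t \<omega>)))"
    and "integral\<^sup>L M (\<lambda>\<omega>. \<phi> \<omega> * (exp (\<alpha> * S c h (Suc t) \<omega>) - exp (\<alpha> * S c h t \<omega>))) = 0"
proof -
  have h0: "h \<ge> 0" using h by simp
  define F where "F = (\<lambda>v. min (ln (runmax (\<lambda>j. exp (\<alpha> * (\<Sum>i<j. v i))) t)) L * exp (\<alpha> * (\<Sum>i<t. v i)))"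
  define G where "G = (\<lambda>v::nat\<Rightarrow>real. exp (\<alpha> * v t))"
  have sm: "(\<lambda>v. \<Sum>i<j. v i :: real) \<in> borel_measurable (PiM {..<t} (\<lambda>_. borel))" if "j \<le> t" for j
    using meas_sum_pi[of "{..<j}" "\<lambda>i. i" "{..<t}"] that by auto
  have Fm: "F \<in> borel_measurable (PiM {..<t} (\<lambda>_. borel))"
    unfolding F_def by (rule meas_phi[where s="\<lambda>j v. \<Sum>i<j. v i"]) (rule sm)
  have Gm: "G \<in> borel_measurable (PiM {t..<Suc t} (\<lambda>_. borel))"
    unfolding G_def by (intro meas_exp_comp measurable_component_singleton) auto
  have ind: "indep_var borel (\<lambda>\<omega>. F (\<lambda>i\<in>{..<t}. D c h i \<omega>)) borel (\<lambda>\<omega>. G (\<lambda>i\<in>{t..<Suc t}. D c h i \<omega>))"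
    by (rule block_indep[OF c h0 _ Fm Gm]) simp
  have Feq: "F (\<lambda>i\<in>{..<t}. D c h i \<omega>) = \<phi> \<omega> * exp (\<alpha> * S c h t \<omega>)" for \<omega>
  proof -
    have "(\<Sum>i<j. (\<lambda>i\<in>{..<t}. D c h i \<omega>) i) = S c h j \<omega>" if "j \<le> t" for j
      using that unfolding S_def by (intro sum.cong) auto
    then have "runmax (\<lambda>j. exp (\<alpha> * (\<Sum>i<j. (\<lambda>i\<in>{..<t}. D c h i \<omega>) i))) t
             = runmax (\<lambda>j. exp (\<alpha> * S c h j \<omega>)) t"
      by (intro runmax_cong) simp
    moreover have "(\<Sum>i<t. (\<lambda>i\<in>{..<t}. D c h i \<omega>) i) = S c h t \<omega>"
      unfolding S_def by (intro sum.cong) auto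
    ultimately show ?thesis unfolding F_def \<phi>_def by simp
  qed
  have Geq: "G (\<lambda>i\<in>{t..<Suc t}. D c h i \<omega>) = exp (\<alpha> * D c h t \<omega>)" for \<omega>
    unfolding G_def by simp
  have [measurable]: "S c h j \<in> borel_measurable M" for j using S_meas[OF c h0] .
  have phim[measurable]: "\<phi> \<in> borel_measurable M" unfolding \<phi>_def
    by measurable
  have xint: "integrable M (\<lambda>\<omega>. exp (\<alpha> * S c h t \<omega>))" by (rule S_exp_int[OF c K h])
  have phib: "0 \<le> \<phi> \<omega> \<and> \<phi> \<omega> \<le> L" for \<omega>
  proof -
    have "exp (\<alpha> * S c h 0 \<omega>) \<le> runmax (\<lambda>j. exp (\<alpha> * S c h j \<omega>)) t" by (rule runmax_ge) simp
    then have "1 \<le> runmax (\<lambda>j. exp (\<alpha> * S c h j \<omega>)) t" by (simp add: S_def)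
    then show ?thesis unfolding \<phi>_def using L by simp
  qed
  have Fint: "integrable M (\<lambda>\<omega>. \<phi> \<omega> * exp (\<alpha> * S c h t \<omega>))"
  proof (rule Bochner_Integration.integrable_bound[OF integrable_mult_right[OF xint, of L]])
    show "(\<lambda>\<omega>. \<phi> \<omega> * exp (\<alpha> * S c h t \<omega>)) \<in> borel_measurable M" by measurable
    show "AE x in M. norm (\<phi> x * exp (\<alpha> * S c h t x)) \<le> norm (L * exp (\<alpha> * S c h t x))"
      using phib L by (auto intro!: mult_right_mono simp: abs_mult)
  qed
  have Fint': "integrable M (\<lambda>\<omega>. F (\<lambda>i\<in>{..<t}. D c h i \<omega>))" using Fint by (simp add: Feq)
  have Gint: "integrable M (\<lambda>\<omega>. G (\<lambda>i\<in>{t..<Suc t}. D c h i \<omega>))"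
    using D_exp[OF c K h, of t] by (simp add: G_def)
  have prodint: "integrable M (\<lambda>\<omega>. \<phi> \<omega> * exp (\<alpha> * S c h t \<omega>) * exp (\<alpha> * D c h t \<omega>))"
    using indep_var_integrable[OF ind Fint' Gint] by (simp add: Feq G_def)
  have prodeq: "integral\<^sup>L M (\<lambda>\<omega>. \<phi> \<omega> * exp (\<alpha> * S c h t \<omega>) * exp (\<alpha> * D c h t \<omega>))
      = integral\<^sup>L M (\<lambda>\<omega>. \<phi> \<omega> * exp (\<alpha> * S c h t \<omega>))"
    using indep_var_lebesgue_integral[OF ind Fint' Gint] D_exp[OF c K h, of t] by (simp add: Feq G_def)
  have eqf: "(\<lambda>\<omega>. \<phi> \<omega> * (exp (\<alpha> * S c h (Suc t) \<omega>) - exp (\<alpha> * S c h t \<omega>)))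
      = (\<lambda>\<omega>. \<phi> \<omega> * exp (\<alpha> * S c h t \<omega>) * exp (\<alpha> * D c h t \<omega>) - \<phi> \<omega> * exp (\<alpha> * S c h t \<omega>))"
    by (simp add: S_Suc distrib_left right_diff_distrib exp_add mult.assoc)
  show "integrable M (\<lambda>\<omega>. \<phi> \<omega> * (exp (\<alpha> * S c h (Suc t) \<omega>) - exp (\<alpha> * S c h t \<omega>)))"
    unfolding eqf using prodint Fint by simp
  show "integral\<^sup>L M (\<lambda>\<omega>. \<phi> \<omega> * (exp (\<alpha> * S c h (Suc t) \<omega>) - exp (\<alpha> * S c h t \<omega>))) = 0"
    unfolding eqf using prodint Fint prodeq by simp
qed

end

lemma integrable_runmax:
  fixes f :: "nat \<Rightarrow> 'b \<Rightarrow> real"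
  assumes "\<And>j. j \<le> k \<Longrightarrow> integrable N (f j)"
  shows "integrable N (\<lambda>x. runmax (\<lambda>j. f j x) k)"
  using assms
proof (induction k)
  case 0 then show ?case by simp
next
  case (Suc k)
  have "integrable N (\<lambda>x. runmax (\<lambda>j. f j x) k)" using Suc by auto
  moreover have "integrable N (f (Suc k))" using Suc by auto
  ultimately show ?case by simp
qed

context levy_ctx
begin

definition Phi :: "real \<Rightarrow> real" where "Phi y = exp (\<alpha> * y) * max (\<alpha> * y) 0"

lemma Phi_meas[measurable]: "Phi \<in> borel_measurable borel"
  unfolding Phi_def by measurable

lemma doob_trunc:
  assumes c: "c \<ge> 0" and K: "K > 0" and h: "h = 1 / real K" and L: "L \<ge> 0"
    and intPhi: "integrable M (\<lambda>\<omega>. Phi (X (real m * h) \<omega>))"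
  shows "(1 - exp (-1)) * integral\<^sup>L M (\<lambda>\<omega>. min (runmax (\<lambda>j. exp (\<alpha> * S c h j \<omega>)) m) (exp L))
     \<le> 1 + integral\<^sup>L M (\<lambda>\<omega>. Phi (X (real m * h) \<omega>))"
proof -
  have h0: "h \<ge> 0" using h by simp
  have Sm[measurable]: "S c h j \<in> borel_measurable M" for j using S_meas[OF c h0] .
  define \<phi> where "\<phi> = (\<lambda>t \<omega>. min (ln (runmax (\<lambda>j. exp (\<alpha> * S c h j \<omega>)) t)) L)"
  define xs where "xs = (\<lambda>j \<omega>. exp (\<alpha> * S c h j \<omega>))"
  define Y where "Y = (\<lambda>\<omega>. X (c + real m * h) \<omega> - X c \<omega>)"
  have Ym[measurable]: "Y \<in> borel_measurable M" unfolding Y_def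
    by (intro borel_measurable_diff Xmeas) (use c h0 in auto)
  have Ph: "xs m \<omega> * max (ln (xs m \<omega>)) 0 = Phi (Y \<omega>)" for \<omega>
    unfolding xs_def Y_def Phi_def by (simp add: S_X)
  note tr = distr_transfer[OF incr_distr[of c "real m * h"] Ym[unfolded Y_def] Xmeas Phi_meas]
  have PhiY_int: "integrable M (\<lambda>\<omega>. Phi (Y \<omega>))" using tr(1) intPhi c h0 unfolding Y_def by simp
  have PhiY_eq: "integral\<^sup>L M (\<lambda>\<omega>. Phi (Y \<omega>)) = integral\<^sup>L M (\<lambda>\<omega>. Phi (X (real m * h) \<omega>))"
    using tr(2) c h0 unfolding Y_def by simp
  have pw: "(1 - exp (-1)) * min (runmax (\<lambda>j. xs j \<omega>) m) (exp L)
      \<le> 1 + Phi (Y \<omega>) - (\<Sum>t<m. \<phi> t \<omega> * (xs (Suc t) \<omega> - xs t \<omega>))" for \<omega>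
  proof -
    have "(1 - exp (-1)) * min (runmax (\<lambda>j. xs j \<omega>) m) (exp L)
      \<le> 1 + xs m \<omega> * max (ln (xs m \<omega>)) 0 - (\<Sum>t<m. min (ln (runmax (\<lambda>j. xs j \<omega>) t)) L * (xs (Suc t) \<omega> - xs t \<omega>))"
      by (rule path_ineq[OF _ _ L]) (auto simp: xs_def S_def)
    moreover have "exp (\<alpha> * S c h m \<omega>) * max (ln (exp (\<alpha> * S c h m \<omega>))) 0 = Phi (Y \<omega>)"
      using Ph[of \<omega>] unfolding xs_def .
    ultimately show ?thesis unfolding \<phi>_def xs_def by simp
  qed
  have mz: "integrable M (\<lambda>\<omega>. \<phi> t \<omega> * (xs (Suc t) \<omega> - xs t \<omega>))"
     "integral\<^sup>L M (\<lambda>\<omega>. \<phi> t \<omega> * (xs (Suc t) \<omega> - xs t \<omega>)) = 0" for t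
    using mart_zero[OF c K h L, of t] unfolding \<phi>_def xs_def by auto
  have lhs_m: "(\<lambda>\<omega>. min (runmax (\<lambda>j. xs j \<omega>) m) (exp L)) \<in> borel_measurable M"
    unfolding xs_def by (rule meas_min_runmax) (rule Sm)
  have lhs_int: "integrable M (\<lambda>\<omega>. (1 - exp (-1)) * min (runmax (\<lambda>j. xs j \<omega>) m) (exp L))"
  proof (rule integrable_mult_right, rule integrable_const_bound[where B="exp L"])
    show "AE x in M. norm (min (runmax (\<lambda>j. xs j x) m) (exp L)) \<le> exp L"
    proof (rule AE_I2)
      fix x
      have "xs 0 x \<le> runmax (\<lambda>j. xs j x) m" by (rule runmax_ge) simp
      then have "0 \<le> runmax (\<lambda>j. xs j x) m" unfolding xs_def by (smt (verit) exp_gt_zero)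
      then show "norm (min (runmax (\<lambda>j. xs j x) m) (exp L)) \<le> exp L" by simp
    qed
  qed (rule lhs_m)
  have rhs_int: "integrable M (\<lambda>\<omega>. 1 + Phi (Y \<omega>) - (\<Sum>t<m. \<phi> t \<omega> * (xs (Suc t) \<omega> - xs t \<omega>)))"
    using PhiY_int mz(1) by (intro Bochner_Integration.integrable_diff Bochner_Integration.integrable_add
        Bochner_Integration.integrable_sum) auto
  have "integral\<^sup>L M (\<lambda>\<omega>. (1 - exp (-1)) * min (runmax (\<lambda>j. xs j \<omega>) m) (exp L))
     \<le> integral\<^sup>L M (\<lambda>\<omega>. 1 + Phi (Y \<omega>) - (\<Sum>t<m. \<phi> t \<omega> * (xs (Suc t) \<omega> - xs t \<omega>)))"
    by (rule integral_mono[OF lhs_int rhs_int pw])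
  also have "\<dots> = integral\<^sup>L M (\<lambda>\<omega>. 1 + Phi (Y \<omega>)) - integral\<^sup>L M (\<lambda>\<omega>. (\<Sum>t<m. \<phi> t \<omega> * (xs (Suc t) \<omega> - xs t \<omega>)))"
    using PhiY_int mz(1) by (intro Bochner_Integration.integral_diff Bochner_Integration.integrable_add
        Bochner_Integration.integrable_sum) auto
  also have "integral\<^sup>L M (\<lambda>\<omega>. (\<Sum>t<m. \<phi> t \<omega> * (xs (Suc t) \<omega> - xs t \<omega>))) = 0"
    using mz by (subst Bochner_Integration.integral_sum) auto
  also have "integral\<^sup>L M (\<lambda>\<omega>. 1 + Phi (Y \<omega>)) = 1 + integral\<^sup>L M (\<lambda>\<omega>. Phi (Y \<omega>))"
    using PhiY_int by (subst Bochner_Integration.integral_add) (auto simp: prob_space)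
  finally show ?thesis unfolding xs_def PhiY_eq by simp
qed

lemma doob_disc:
  assumes c: "c \<ge> 0" and K: "K > 0" and h: "h = 1 / real K"
    and intPhi: "integrable M (\<lambda>\<omega>. Phi (X (real m * h) \<omega>))"
  shows "integrable M (\<lambda>\<omega>. runmax (\<lambda>j. exp (\<alpha> * S c h j \<omega>)) m)"
    and "(1 - exp (-1)) * integral\<^sup>L M (\<lambda>\<omega>. runmax (\<lambda>j. exp (\<alpha> * S c h j \<omega>)) m)
     \<le> 1 + integral\<^sup>L M (\<lambda>\<omega>. Phi (X (real m * h) \<omega>))"
proof -
  have h0: "h \<ge> 0" using h by simp
  have Sm[measurable]: "S c h j \<in> borel_measurable M" for j using S_meas[OF c h0] .
  define R where "R = (\<lambda>\<omega>. runmax (\<lambda>j. exp (\<alpha> * S c h j \<omega>)) m)"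
  show Rint: "integrable M R" unfolding R_def
    by (rule integrable_runmax) (rule S_exp_int[OF c K h])
  have R1: "1 \<le> R \<omega>" for \<omega>
  proof -
    have "exp (\<alpha> * S c h 0 \<omega>) \<le> R \<omega>" unfolding R_def by (rule runmax_ge) simp
    then show ?thesis by (simp add: S_def)
  qed
  have Rm: "R \<in> borel_measurable M" using Rint by auto
  define s where "s = (\<lambda>n \<omega>. min (R \<omega>) (exp (real n)))"
  have sm: "s n \<in> borel_measurable M" for n unfolding s_def using Rm by measurable
  have lim: "(\<lambda>n. integral\<^sup>L M (s n)) \<longlonglongrightarrow> integral\<^sup>L M R"
  proof (rule integral_dominated_convergence[OF Rm sm Rint])
    show "AE x in M. (\<lambda>i. s i x) \<longlonglongrightarrow> R x"
    proof (rule AE_I2)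
      fix x
      have "eventually (\<lambda>n. s n x = R x) sequentially"
      proof (rule eventually_sequentiallyI[of "nat \<lceil>R x\<rceil>"])
        fix n assume "nat \<lceil>R x\<rceil> \<le> n"
        then have "R x \<le> real n" by linarith
        also have "\<dots> \<le> exp (real n)" using exp_ge_add_one_self[of "real n"] by linarith
        finally show "s n x = R x" unfolding s_def by simp
      qed
      then show "(\<lambda>i. s i x) \<longlonglongrightarrow> R x" by (rule tendsto_eventually)
    qed
    show "AE x in M. norm (s i x) \<le> R x" for i
    proof (rule AE_I2)
      fix x
      have "0 \<le> min (R x) (exp (real i))" using R1[of x] by simp
      then show "norm (s i x) \<le> R x" unfolding s_def by simp
    qed
  qed
  have bd: "(1 - exp (-1)) * integral\<^sup>L M (s n) \<le> 1 + integral\<^sup>L M (\<lambda>\<omega>. Phi (X (real m * h) \<omega>))" for n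
    using doob_trunc[OF c K h _ intPhi, of "real n"] unfolding s_def R_def by simp
  have tl: "(\<lambda>n. (1 - exp (-1)) * integral\<^sup>L M (s n)) \<longlonglongrightarrow> (1 - exp (-1)) * integral\<^sup>L M R"
    by (intro tendsto_mult_left lim)
  have "(1 - exp (-1)) * integral\<^sup>L M R \<le> 1 + integral\<^sup>L M (\<lambda>\<omega>. Phi (X (real m * h) \<omega>))"
    by (rule LIMSEQ_le_const2[OF tl]) (use bd in auto)
  then show "(1 - exp (-1)) * integral\<^sup>L M (\<lambda>\<omega>. runmax (\<lambda>j. exp (\<alpha> * S c h j \<omega>)) m)
     \<le> 1 + integral\<^sup>L M (\<lambda>\<omega>. Phi (X (real m * h) \<omega>))" unfolding R_def .
qed

end

lemma prod_delta_mult: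
  fixes f g :: "nat \<Rightarrow> real"
  assumes "j < N"
  shows "(\<Prod>i<N. (if i = j then g i else 1) * f i) = g j * (\<Prod>i<N. f i)"
  using assms by (simp add: prod.distrib prod.delta)

lemma uexp_ge: "(u::real) * exp u \<ge> - exp (-1)"
proof -
  have "exp (-1 - u) \<ge> 1 + (-1 - u)" by (rule exp_ge_add_one_self)
  then have "exp (-1) \<ge> - u * exp u"
  proof -
    assume a: "exp (-1 - u) \<ge> 1 + (-1 - u)"
    have "exp (-1 - u) * exp u = exp (-1)" by (simp add: exp_add[symmetric])
    moreover have "(1 + (-1 - u)) * exp u \<le> exp (-1 - u) * exp u" using a by (intro mult_right_mono) auto
    ultimately show ?thesis by simp
  qed
  then show ?thesis by simp
qed

context levy_ctx
begin

definition mu :: real where "mu = integral\<^sup>L M (\<lambda>\<omega>. X 1 \<omega> * exp (\<alpha> * X 1 \<omega>))"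

lemma XN_moment:
  shows "integrable M (\<lambda>\<omega>. X (real N) \<omega> * exp (\<alpha> * X (real N) \<omega>))"
    and "integral\<^sup>L M (\<lambda>\<omega>. X (real N) \<omega> * exp (\<alpha> * X (real N) \<omega>)) = real N * mu"
proof -
  have X1m: "X 1 \<in> borel_measurable M" by (rule Xmeas) simp
  note trE = distr_transfer[OF D_distr[of 0 1] D_meas X1m, of "\<lambda>x. exp (\<alpha> * x)", simplified]
  note trM = distr_transfer[OF D_distr[of 0 1] D_meas X1m, of "\<lambda>x. x * exp (\<alpha> * x)", simplified]
  have ie: "integrable M (\<lambda>\<omega>. exp (\<alpha> * D 0 1 i \<omega>))" "integral\<^sup>L M (\<lambda>\<omega>. exp (\<alpha> * D 0 1 i \<omega>)) = 1" for i
    using trE int1 E1 by auto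
  have im: "integrable M (\<lambda>\<omega>. D 0 1 i \<omega> * exp (\<alpha> * D 0 1 i \<omega>))"
      "integral\<^sup>L M (\<lambda>\<omega>. D 0 1 i \<omega> * exp (\<alpha> * D 0 1 i \<omega>)) = mu" for i
    using trM intX unfolding mu_def by auto
  define Z where "Z = (\<lambda>j i \<omega>. (if i = j then D 0 1 i \<omega> else 1) * exp (\<alpha> * D 0 1 i \<omega>))"
  have indZ: "indep_vars (\<lambda>_. borel) (Z j) {..<N}" for j
    unfolding Z_def
    by (rule indep_vars_compose2[where Y="\<lambda>i x. (if i = j then x else 1) * exp (\<alpha> * x)", OF D_indep]) auto
  have Zint: "integrable M (Z j i)" for i j
    unfolding Z_def by (cases "i = j") (use ie im in auto)
  have Zprod_int: "integrable M (\<lambda>\<omega>. \<Prod>i<N. Z j i \<omega>)" for j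
    by (rule indep_vars_integrable[OF _ indZ]) (auto intro: Zint)
  have Zprod_eq: "integral\<^sup>L M (\<lambda>\<omega>. \<Prod>i<N. Z j i \<omega>) = mu" if "j < N" for j
  proof -
    have "integral\<^sup>L M (\<lambda>\<omega>. \<Prod>i<N. Z j i \<omega>) = (\<Prod>i<N. integral\<^sup>L M (Z j i))"
      by (rule indep_vars_lebesgue_integral[OF _ indZ]) (auto intro: Zint)
    also have "\<dots> = (\<Prod>i<N. (if i = j then mu else 1))"
      by (intro prod.cong) (auto simp: Z_def ie im)
    also have "\<dots> = mu" using that by (simp add: prod.delta)
    finally show ?thesis .
  qed
  have pw: "X (real N) \<omega> * exp (\<alpha> * X (real N) \<omega>) = (\<Sum>j<N. \<Prod>i<N. Z j i \<omega>)" if "\<omega> \<in> space M" for \<omega>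
  proof -
    have XN: "X (real N) \<omega> = (\<Sum>i<N. D 0 1 i \<omega>)"
      using D_sum[of 0 N 1 \<omega>] X0[OF that] by simp
    have "exp (\<alpha> * X (real N) \<omega>) = (\<Prod>i<N. exp (\<alpha> * D 0 1 i \<omega>))"
      unfolding XN by (simp add: sum_distrib_left exp_sum)
    then have "X (real N) \<omega> * exp (\<alpha> * X (real N) \<omega>) = (\<Sum>j<N. D 0 1 j \<omega> * (\<Prod>i<N. exp (\<alpha> * D 0 1 i \<omega>)))"
      by (simp add: XN sum_distrib_right)
    also have "\<dots> = (\<Sum>j<N. \<Prod>i<N. Z j i \<omega>)"
      unfolding Z_def by (intro sum.cong refl) (simp add: prod_delta_mult)
    finally show ?thesis .
  qed
  have sint: "integrable M (\<lambda>\<omega>. \<Sum>j<N. \<Prod>i<N. Z j i \<omega>)"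
    by (intro Bochner_Integration.integrable_sum Zprod_int)
  show "integrable M (\<lambda>\<omega>. X (real N) \<omega> * exp (\<alpha> * X (real N) \<omega>))"
    by (rule Bochner_Integration.integrable_cong[THEN iffD2, OF refl _ sint]) (simp add: pw)
  have "integral\<^sup>L M (\<lambda>\<omega>. X (real N) \<omega> * exp (\<alpha> * X (real N) \<omega>)) = integral\<^sup>L M (\<lambda>\<omega>. \<Sum>j<N. \<Prod>i<N. Z j i \<omega>)"
    by (rule Bochner_Integration.integral_cong) (simp_all add: pw)
  also have "\<dots> = (\<Sum>j<N. integral\<^sup>L M (\<lambda>\<omega>. \<Prod>i<N. Z j i \<omega>))"
    by (rule Bochner_Integration.integral_sum) (rule Zprod_int)
  also have "\<dots> = real N * mu" by (simp add: Zprod_eq)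
  finally show "integral\<^sup>L M (\<lambda>\<omega>. X (real N) \<omega> * exp (\<alpha> * X (real N) \<omega>)) = real N * mu" .
qed

lemma Phi_le: "Phi y \<le> \<alpha> * (y * exp (\<alpha> * y)) + exp (-1)"
proof (cases "\<alpha> * y \<ge> 0")
  case True then show ?thesis by (simp add: Phi_def mult.commute mult.left_commute)
next
  case False
  have "- exp (-1) \<le> (\<alpha> * y) * exp (\<alpha> * y)" by (rule uexp_ge)
  then show ?thesis using False by (simp add: Phi_def mult.assoc)
qed

lemma Phi_abs: "\<bar>Phi y\<bar> \<le> \<alpha> * \<bar>y * exp (\<alpha> * y)\<bar>"
  using apos by (auto simp: Phi_def abs_mult max_def mult.commute mult.left_commute)

lemma Phi_int:
  shows "integrable M (\<lambda>\<omega>. Phi (X (real N) \<omega>))"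
    and "integral\<^sup>L M (\<lambda>\<omega>. Phi (X (real N) \<omega>)) \<le> \<alpha> * (real N * mu) + exp (-1)"
proof -
  have XNm[measurable]: "X (real N) \<in> borel_measurable M" by (rule Xmeas) simp
  show I: "integrable M (\<lambda>\<omega>. Phi (X (real N) \<omega>))"
    by (rule Bochner_Integration.integrable_bound[OF integrable_mult_right[OF integrable_abs[OF XN_moment(1)], of \<alpha>]])
       (use Phi_abs apos in \<open>auto\<close>)
  have "integral\<^sup>L M (\<lambda>\<omega>. Phi (X (real N) \<omega>)) \<le> integral\<^sup>L M (\<lambda>\<omega>. \<alpha> * (X (real N) \<omega> * exp (\<alpha> * X (real N) \<omega>)) + exp (-1))"
    by (rule integral_mono[OF I]) (auto intro!: Phi_le XN_moment(1))
  also have "\<dots> = \<alpha> * (real N * mu) + exp (-1)"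
    using XN_moment by (subst Bochner_Integration.integral_add) (auto simp: prob_space)
  finally show "integral\<^sup>L M (\<lambda>\<omega>. Phi (X (real N) \<omega>)) \<le> \<alpha> * (real N * mu) + exp (-1)" .
qed

end

lemma cadlag_bdd:
  fixes g :: "real \<Rightarrow> real"
  assumes rc: "\<And>t. 0 \<le> t \<Longrightarrow> continuous (at_right t) g"
    and ll: "\<And>t. 0 < t \<Longrightarrow> \<exists>l. (g \<longlongrightarrow> l) (at_left t)"
    and T: "0 \<le> T"
  shows "bdd_above (g ` {0..T})"
proof -
  have loc: "\<exists>d B. d > 0 \<and> (\<forall>u\<in>{0..T}. dist u t < d \<longrightarrow> g u \<le> B)" if t: "t \<in> {0..T}" for t
  proof -
    have "(g \<longlongrightarrow> g t) (at_right t)" using rc[of t] t by (simp add: continuous_within)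
    then have "eventually (\<lambda>u. g u < g t + 1) (at_right t)" by (rule order_tendstoD) simp
    then obtain br where br: "br > t" "\<forall>y>t. y < br \<longrightarrow> g y < g t + 1"
      using eventually_at_right[of t "t+1"] by auto
    show ?thesis
    proof (cases "t = 0")
      case True
      show ?thesis
      proof (intro exI conjI ballI impI)
        show "br - t > 0" using br by simp
        fix u assume u: "u \<in> {0..T}" "dist u t < br - t"
        show "g u \<le> g t + 1"
        proof (cases "u = t")
          case False
          then have "u > t" using u True by auto
          moreover have "u < br" using u by (auto simp: dist_real_def)
          ultimately show ?thesis using br by auto
        qed simp
      qed
    next
      case False
      then have tp: "t > 0" using t by auto
      obtain l where l: "(g \<longlongrightarrow> l) (at_left t)" using ll[OF tp] by auto
      then have "eventually (\<lambda>u. g u < l + 1) (at_left t)" by (rule order_tendstoD) simp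
      then obtain bl where bl: "bl < t" "\<forall>y>bl. y < t \<longrightarrow> g y < l + 1"
        using eventually_at_left[of "t - 1" t] by auto
      show ?thesis
      proof (intro exI conjI ballI impI)
        show "min (br - t) (t - bl) > 0" using br bl by simp
        fix u assume u: "u \<in> {0..T}" "dist u t < min (br - t) (t - bl)"
        show "g u \<le> max (g t + 1) (l + 1)"
        proof (cases "u = t")
          case False
          show ?thesis
          proof (cases "u > t")
            case True
            moreover have "u < br" using u by (auto simp: dist_real_def)
            ultimately show ?thesis using br by force
          next
            case nt: False
            then have "u < t" using False by auto
            moreover have "u > bl" using u by (auto simp: dist_real_def)
            ultimately show ?thesis using bl by force
          qed
        qed simp
      qed
    qed
  qed
  then have "\<forall>t\<in>{0..T}. \<exists>p. fst p > 0 \<and> (\<forall>u\<in>{0..T}. dist u t < fst p \<longrightarrow> g u \<le> snd p)"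
    by (metis fst_conv snd_conv)
  then obtain p where p: "\<And>t. t \<in> {0..T} \<Longrightarrow> fst (p t) > 0 \<and> (\<forall>u\<in>{0..T}. dist u t < fst (p t) \<longrightarrow> g u \<le> snd (p t))"
    by metis
  have cov: "{0..T} \<subseteq> (\<Union>c\<in>{0..T}. ball c (fst (p c)))"
  proof
    fix x assume "x \<in> {0..T}" then show "x \<in> (\<Union>c\<in>{0..T}. ball c (fst (p c)))" using p[of x] by force
  qed
  obtain C' where C': "C' \<subseteq> {0..T}" "finite C'" "{0..T} \<subseteq> (\<Union>c\<in>C'. ball c (fst (p c)))"
    using compactE_image[OF compact_Icc _ cov] by blast
  show ?thesis
  proof (rule bdd_aboveI2)
    fix u assume u: "u \<in> {0..T}"
    then obtain c where c: "c \<in> C'" "u \<in> ball c (fst (p c))" using C' by blast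
    have "g u \<le> snd (p c)" using p[of c] c C' u by (auto simp: dist_commute)
    also have "\<dots> \<le> Max ((\<lambda>c. snd (p c)) ` C')" using c C' by (intro Max_ge) auto
    finally show "g u \<le> Max ((\<lambda>c. snd (p c)) ` C')" .
  qed
qed

lemma grid_le: "0 \<le> (s::real) \<Longrightarrow> s \<le> T \<Longrightarrow> nat \<lceil>s * 2 ^ n\<rceil> \<le> nat \<lceil>T\<rceil> * 2 ^ n"
proof -
  assume s: "0 \<le> s" "s \<le> T"
  have "s * 2 ^ n \<le> of_int (\<lceil>T\<rceil> * 2 ^ n)"
    using s by (simp add: mult_right_mono le_of_int_ceiling order_trans)
  then have "\<lceil>s * 2 ^ n\<rceil> \<le> \<lceil>T\<rceil> * 2 ^ n" by (simp add: ceiling_le_iff)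
  moreover have T0: "\<lceil>T\<rceil> \<ge> 0" using s ceiling_mono[of 0 T] by simp
  ultimately have "nat \<lceil>s * 2 ^ n\<rceil> \<le> nat (\<lceil>T\<rceil> * 2 ^ n)" by (intro nat_mono)
  also have "nat (\<lceil>T\<rceil> * 2 ^ n) = nat \<lceil>T\<rceil> * 2 ^ n" using T0 by (simp add: nat_mult_distrib nat_power_eq)
  finally show ?thesis .
qed

context levy_ctx
begin

definition Gm :: "nat \<Rightarrow> real \<Rightarrow> 'a \<Rightarrow> real" where
  "Gm n T \<omega> = runmax (\<lambda>k. X (min (real k / 2 ^ n) T) \<omega>) (nat \<lceil>T\<rceil> * 2 ^ n)"

lemma Gm_meas: "T \<ge> 0 \<Longrightarrow> Gm n T \<in> borel_measurable M"
  unfolding Gm_def[abs_def] by (intro measurable_runmax Xmeas) auto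

lemma path_bdd: "\<omega> \<in> space M \<Longrightarrow> T \<ge> 0 \<Longrightarrow> bdd_above ((\<lambda>s. X s \<omega>) ` {0..T})"
  by (rule cadlag_bdd) (use cadlag in auto)

lemma Gm_le: "\<omega> \<in> space M \<Longrightarrow> T \<ge> 0 \<Longrightarrow> Gm n T \<omega> \<le> running_sup X T \<omega>"
  unfolding Gm_def running_sup_def
  by (intro runmax_le cSup_upper path_bdd) auto

lemma Gm_mono: "T \<ge> 0 \<Longrightarrow> Gm n T \<omega> \<le> Gm (Suc n) T \<omega>"
  unfolding Gm_def
proof (intro runmax_le)
  fix k assume k: "k \<le> nat \<lceil>T\<rceil> * 2 ^ n"
  have "X (min (real k / 2 ^ n) T) \<omega> = X (min (real (2 * k) / 2 ^ Suc n) T) \<omega>" by simp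
  also have "\<dots> \<le> runmax (\<lambda>k. X (min (real k / 2 ^ Suc n) T) \<omega>) (nat \<lceil>T\<rceil> * 2 ^ Suc n)"
    using k by (intro runmax_ge[where f="\<lambda>k. X (min (real k / 2 ^ Suc n) T) \<omega>"]) auto
  finally show "X (min (real k / 2 ^ n) T) \<omega> \<le> runmax (\<lambda>k. X (min (real k / 2 ^ Suc n) T) \<omega>) (nat \<lceil>T\<rceil> * 2 ^ Suc n)" .
qed

lemma Gm_lim:
  assumes \<omega>: "\<omega> \<in> space M" and T: "T \<ge> 0"
  shows "(\<lambda>n. Gm n T \<omega>) \<longlonglongrightarrow> running_sup X T \<omega>"
proof -
  have bdd: "bdd_above (range (\<lambda>n. Gm n T \<omega>))"
    using Gm_le[OF \<omega> T] by (intro bdd_aboveI2) auto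
  have inc: "incseq (\<lambda>n. Gm n T \<omega>)" by (intro incseq_SucI Gm_mono T)
  have lim: "(\<lambda>n. Gm n T \<omega>) \<longlonglongrightarrow> (SUP n. Gm n T \<omega>)" by (rule LIMSEQ_incseq_SUP[OF bdd inc])
  have le1: "(SUP n. Gm n T \<omega>) \<le> running_sup X T \<omega>"
    using Gm_le[OF \<omega> T] by (intro cSUP_least) auto
  have le2: "running_sup X T \<omega> \<le> (SUP n. Gm n T \<omega>)"
    unfolding running_sup_def
  proof (rule cSup_least)
    show "(\<lambda>s. X s \<omega>) ` {0..T} \<noteq> {}" using T by auto
    fix y assume "y \<in> (\<lambda>s. X s \<omega>) ` {0..T}"
    then obtain s where s: "0 \<le> s" "s \<le> T" "y = X s \<omega>" by auto
    define p where "p = (\<lambda>n::nat. min (real (nat \<lceil>s * 2 ^ n\<rceil>) / 2 ^ n) T)"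
    have pge: "s \<le> p n" for n
    proof -
      have "s * 2 ^ n \<le> real (nat \<lceil>s * 2 ^ n\<rceil>)" by linarith
      then have "s \<le> real (nat \<lceil>s * 2 ^ n\<rceil>) / 2 ^ n" by (simp add: field_simps)
      then show ?thesis unfolding p_def using s by simp
    qed
    have ple: "p n \<le> s + inverse (2 ^ n)" for n
    proof -
      have x0: "0 \<le> s * 2 ^ n" using s by simp
      then have "0 \<le> \<lceil>s * 2 ^ n\<rceil>" using ceiling_mono[of 0 "s * 2 ^ n"] by simp
      then have "real (nat \<lceil>s * 2 ^ n\<rceil>) = of_int \<lceil>s * 2 ^ n\<rceil>" by simp
      then have "real (nat \<lceil>s * 2 ^ n\<rceil>) \<le> s * 2 ^ n + 1"
        using of_int_ceiling_le_add_one[of "s * 2 ^ n"] by linarith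
      then have "real (nat \<lceil>s * 2 ^ n\<rceil>) / 2 ^ n \<le> s + inverse (2 ^ n)" by (simp add: field_simps)
      then show ?thesis unfolding p_def by simp
    qed
    have plim: "p \<longlonglongrightarrow> s"
    proof (rule tendsto_sandwich[of "\<lambda>n. s" _ _ "\<lambda>n. s + inverse (2 ^ n)"])
      show "eventually (\<lambda>n. s \<le> p n) sequentially" using pge by simp
      show "eventually (\<lambda>n. p n \<le> s + inverse (2 ^ n)) sequentially" using ple by simp
      show "(\<lambda>n. s + inverse (2 ^ n)) \<longlonglongrightarrow> s"
        using tendsto_add[OF tendsto_const LIMSEQ_inverse_realpow_zero[of "2::real"]] by simp
    qed simp
    have "continuous (at_right s) (\<lambda>s. X s \<omega>)" using cadlag[OF \<omega> s(1)] by simp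
    then have "continuous (at s within {s..}) (\<lambda>s. X s \<omega>)" by (simp add: at_within_Ici_at_right)
    then have "\<forall>x. (\<forall>n. x n \<in> {s..}) \<and> x \<longlonglongrightarrow> s \<longrightarrow> ((\<lambda>s. X s \<omega>) \<circ> x) \<longlonglongrightarrow> X s \<omega>"
      unfolding continuous_within_sequentially .
    then have "(\<forall>n. p n \<in> {s..}) \<and> p \<longlonglongrightarrow> s \<longrightarrow> ((\<lambda>s. X s \<omega>) \<circ> p) \<longlonglongrightarrow> X s \<omega>" by (rule spec)
    then have Xlim: "((\<lambda>s. X s \<omega>) \<circ> p) \<longlonglongrightarrow> X s \<omega>" using pge plim by auto
    have "X (p n) \<omega> \<le> (SUP n. Gm n T \<omega>)" for n
    proof -
      have "X (p n) \<omega> \<le> Gm n T \<omega>"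
        unfolding Gm_def p_def by (rule runmax_ge[where f="\<lambda>k. X (min (real k / 2 ^ n) T) \<omega>"]) (rule grid_le[OF s(1,2)])
      also have "\<dots> \<le> (SUP n. Gm n T \<omega>)" by (rule cSUP_upper[OF _ bdd]) simp
      finally show ?thesis .
    qed
    then show "y \<le> (SUP n. Gm n T \<omega>)" unfolding s(3)
      by (intro LIMSEQ_le_const2[OF Xlim]) auto
  qed
  show ?thesis using lim le1 le2 by simp
qed

lemma rsup_meas: "T \<ge> 0 \<Longrightarrow> running_sup X T \<in> borel_measurable M"
  by (rule borel_measurable_LIMSEQ_real[OF Gm_lim Gm_meas])

lemma rsup_mono: "\<omega> \<in> space M \<Longrightarrow> 0 \<le> s \<Longrightarrow> s \<le> T \<Longrightarrow> running_sup X s \<omega> \<le> running_sup X T \<omega>"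
  unfolding running_sup_def by (rule cSup_subset_mono) (auto intro: path_bdd)

lemma rsup_nonneg: "\<omega> \<in> space M \<Longrightarrow> 0 \<le> T \<Longrightarrow> 0 \<le> running_sup X T \<omega>"
  unfolding running_sup_def using X0[of \<omega>]
  by (intro cSup_upper2[where x="X 0 \<omega>"] path_bdd) auto

lemma rsup_0: "\<omega> \<in> space M \<Longrightarrow> running_sup X 0 \<omega> = 0"
  unfolding running_sup_def using X0[of \<omega>] by simp

lemma Gm_nat: "\<omega> \<in> space M \<Longrightarrow> Gm n (real N) \<omega> = runmax (\<lambda>k. S 0 (1 / 2 ^ n) k \<omega>) (N * 2 ^ n)"
proof -
  assume \<omega>: "\<omega> \<in> space M"
  have "Gm n (real N) \<omega> = runmax (\<lambda>k. X (min (real k / 2 ^ n) (real N)) \<omega>) (N * 2 ^ n)"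
    unfolding Gm_def by simp
  also have "\<dots> = runmax (\<lambda>k. S 0 (1 / 2 ^ n) k \<omega>) (N * 2 ^ n)"
  proof (rule runmax_cong)
    fix k assume k: "k \<le> N * 2 ^ n"
    have "real k \<le> real N * 2 ^ n" using k by (metis of_nat_le_iff of_nat_mult of_nat_numeral of_nat_power)
    then have "real k / 2 ^ n \<le> real N" by (simp add: field_simps)
    then show "X (min (real k / 2 ^ n) (real N)) \<omega> = S 0 (1 / 2 ^ n) k \<omega>"
      using X0[OF \<omega>] by (simp add: S_X)
  qed
  finally show ?thesis .
qed

end

lemma runmax_split:
  "runmax f (p + q) \<le> runmax f p + runmax (\<lambda>j. f (p + j) - f p) q"
proof (rule runmax_le)
  fix k assume k: "k \<le> p + q"
  have B0: "0 \<le> runmax (\<lambda>j. f (p + j) - f p) q"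
    using runmax_ge[of 0 q "\<lambda>j. f (p + j) - f p"] by simp
  show "f k \<le> runmax f p + runmax (\<lambda>j. f (p + j) - f p) q"
  proof (cases "k \<le> p")
    case True
    then show ?thesis using runmax_ge[of k p f] B0 by linarith
  next
    case False
    define j where "j = k - p"
    have j: "k = p + j" "j \<le> q" using False k by (auto simp: j_def)
    have "f p \<le> runmax f p" by (rule runmax_ge) simp
    moreover have "f (p + j) - f p \<le> runmax (\<lambda>j. f (p + j) - f p) q"
      using runmax_ge[of j q "\<lambda>j. f (p + j) - f p"] j by simp
    moreover have "f k = f (p + j)" using j by simp
    ultimately show ?thesis by linarith
  qed
qed

lemma sum_split_shift: "(\<Sum>i<p + (j::nat). f i) = (\<Sum>i<p. f i) + (\<Sum>i<j. f (p + i) :: real)"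
  by (induction j) auto

lemma exp_neg1_lt: "exp (-1::real) < 1" by simp

context levy_ctx
begin

definition CB :: "nat \<Rightarrow> real" where
  "CB N = (1 + \<alpha> * (real N * mu) + exp (-1)) / (1 - exp (-1))"

lemma doob_nat:
  fixes c :: real and B :: nat
  assumes c: "c \<ge> 0"
  shows "integrable M (\<lambda>\<omega>. runmax (\<lambda>j. exp (\<alpha> * S c (1 / 2 ^ n) j \<omega>)) (B * 2 ^ n))"
    and "integral\<^sup>L M (\<lambda>\<omega>. runmax (\<lambda>j. exp (\<alpha> * S c (1 / 2 ^ n) j \<omega>)) (B * 2 ^ n)) \<le> CB B"
proof -
  have K: "(2::nat) ^ n > 0" by simp
  have h: "(1 / 2 ^ n :: real) = 1 / real ((2::nat) ^ n)" by simp
  have arg: "real (B * 2 ^ n) * (1 / 2 ^ n) = real B" by simp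
  have iP: "integrable M (\<lambda>\<omega>. Phi (X (real (B * 2 ^ n) * (1 / 2 ^ n)) \<omega>))"
    unfolding arg by (rule Phi_int(1))
  note dd = doob_disc[OF c K h iP]
  show "integrable M (\<lambda>\<omega>. runmax (\<lambda>j. exp (\<alpha> * S c (1 / 2 ^ n) j \<omega>)) (B * 2 ^ n))" by (rule dd(1))
  have e: "0 < 1 - exp (-1::real)" using exp_neg1_lt by simp
  have "(1 - exp (-1)) * integral\<^sup>L M (\<lambda>\<omega>. runmax (\<lambda>j. exp (\<alpha> * S c (1 / 2 ^ n) j \<omega>)) (B * 2 ^ n))
      \<le> 1 + (\<alpha> * (real B * mu) + exp (-1))"
    using dd(2) Phi_int(2)[of B] unfolding arg by linarith
  then show "integral\<^sup>L M (\<lambda>\<omega>. runmax (\<lambda>j. exp (\<alpha> * S c (1 / 2 ^ n) j \<omega>)) (B * 2 ^ n)) \<le> CB B"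
    unfolding CB_def using e by (simp add: pos_le_divide_eq mult.commute add.assoc)
qed

lemma expGm_nat: "\<omega> \<in> space M \<Longrightarrow> exp (\<alpha> * Gm n (real N) \<omega>) = runmax (\<lambda>j. exp (\<alpha> * S 0 (1 / 2 ^ n) j \<omega>)) (N * 2 ^ n)"
  using Gm_nat[of \<omega> n N] runmax_exp[of \<alpha>] apos by simp

lemma sup_int:
  shows "integrable M (\<lambda>\<omega>. exp (\<alpha> * running_sup X (real N) \<omega>))"
    and "integral\<^sup>L M (\<lambda>\<omega>. exp (\<alpha> * running_sup X (real N) \<omega>)) \<le> CB N"
proof -
  define u where "u = (\<lambda>n \<omega>. exp (\<alpha> * Gm n (real N) \<omega>))"
  have uint: "integrable M (u n)" for n
  proof -
    have "integrable M (\<lambda>\<omega>. runmax (\<lambda>j. exp (\<alpha> * S 0 (1 / 2 ^ n) j \<omega>)) (N * 2 ^ n))"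
      using doob_nat(1)[of 0 n N] by simp
    then show ?thesis by (simp add: u_def expGm_nat cong: Bochner_Integration.integrable_cong)
  qed
  have ubd: "integral\<^sup>L M (u n) \<le> CB N" for n
  proof -
    have "integral\<^sup>L M (u n) = integral\<^sup>L M (\<lambda>\<omega>. runmax (\<lambda>j. exp (\<alpha> * S 0 (1 / 2 ^ n) j \<omega>)) (N * 2 ^ n))"
      by (rule Bochner_Integration.integral_cong) (auto simp: u_def expGm_nat)
    then show ?thesis using doob_nat(2)[of 0 n N] by simp
  qed
  have umono: "u n \<omega> \<le> u (Suc n) \<omega>" for n \<omega>
    unfolding u_def using Gm_mono[of "real N" n \<omega>] apos by (simp add: mult_left_mono)
  have ulim: "(\<lambda>n. u n \<omega>) \<longlonglongrightarrow> exp (\<alpha> * running_sup X (real N) \<omega>)" if "\<omega> \<in> space M" for \<omega>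
    unfolding u_def by (intro tendsto_exp tendsto_mult_left Gm_lim that) simp
  have iinc: "incseq (\<lambda>n. integral\<^sup>L M (u n))"
    by (intro incseq_SucI integral_mono uint umono)
  have ibdd: "bdd_above (range (\<lambda>n. integral\<^sup>L M (u n)))" using ubd by (intro bdd_aboveI2) auto
  have ilim: "(\<lambda>n. integral\<^sup>L M (u n)) \<longlonglongrightarrow> (SUP n. integral\<^sup>L M (u n))"
    by (rule LIMSEQ_incseq_SUP[OF ibdd iinc])
  have rm: "(\<lambda>\<omega>. exp (\<alpha> * running_sup X (real N) \<omega>)) \<in> borel_measurable M"
    using rsup_meas[of "real N"] by (intro meas_exp_comp) simp
  note mc = integral_monotone_convergence_nonneg[OF uint _ _ _ ilim rm]
  have a1: "AE x in M. mono (\<lambda>n. u n x)"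
  proof (rule AE_I2)
    fix x show "mono (\<lambda>n. u n x)" by (rule mono_iff_le_Suc[THEN iffD2]) (intro allI umono)
  qed
  have a2: "AE x in M. 0 \<le> u i x" for i by (simp add: u_def)
  have a3: "AE x in M. (\<lambda>i. u i x) \<longlonglongrightarrow> exp (\<alpha> * running_sup X (real N) x)" using ulim by (intro AE_I2) simp
  show "integrable M (\<lambda>\<omega>. exp (\<alpha> * running_sup X (real N) \<omega>))" using mc(1)[OF a1 a2 a3] .
  have "integral\<^sup>L M (\<lambda>\<omega>. exp (\<alpha> * running_sup X (real N) \<omega>)) = (SUP n. integral\<^sup>L M (u n))"
    using mc(2)[OF a1 a2 a3] .
  also have "\<dots> \<le> CB N" using ubd by (intro cSUP_least) auto
  finally show "integral\<^sup>L M (\<lambda>\<omega>. exp (\<alpha> * running_sup X (real N) \<omega>)) \<le> CB N" .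
qed

lemma sup_sub:
  fixes a b :: nat
  shows "integral\<^sup>L M (\<lambda>\<omega>. exp (\<alpha> * running_sup X (real (a + b)) \<omega>))
     \<le> integral\<^sup>L M (\<lambda>\<omega>. exp (\<alpha> * running_sup X (real a) \<omega>)) * CB b"
proof -
  define Fa where "Fa = integral\<^sup>L M (\<lambda>\<omega>. exp (\<alpha> * running_sup X (real a) \<omega>))"
  have Fa0: "0 \<le> Fa" unfolding Fa_def by (intro integral_nonneg_AE) simp
  have lev: "integral\<^sup>L M (\<lambda>\<omega>. exp (\<alpha> * Gm n (real (a + b)) \<omega>)) \<le> Fa * CB b" for n
  proof -
    define h :: real where "h = 1 / 2 ^ n"
    define p where "p = a * 2 ^ n"
    define q where "q = b * 2 ^ n"
    have h0: "h \<ge> 0" by (simp add: h_def)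
    have K: "(2::nat) ^ n > 0" by simp
    have hK: "h = 1 / real ((2::nat) ^ n)" by (simp add: h_def)
    have Dsh: "D 0 h (p + i) \<omega> = D (real a) h i \<omega>" for i \<omega>
    proof -
      have e1: "0 + real (Suc (p + i)) * h = real a + real (Suc i) * h"
        by (simp add: p_def h_def field_simps)
      have e2: "0 + real (p + i) * h = real a + real i * h"
        by (simp add: p_def h_def field_simps)
      show ?thesis by (simp only: D_def e1 e2)
    qed
    have SA: "S 0 h (p + j) \<omega> - S 0 h p \<omega> = S (real a) h j \<omega>" for j \<omega>
      by (simp add: S_def sum_split_shift Dsh)
    have Gm_eq: "Gm n (real (a + b)) \<omega> = runmax (\<lambda>k. S 0 h k \<omega>) (p + q)" if "\<omega> \<in> space M" for \<omega>
      using Gm_nat[OF that, of n "a + b"] by (simp add: h_def p_def q_def add_mult_distrib)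
    define A where "A = (\<lambda>\<omega>. runmax (\<lambda>k. S 0 h k \<omega>) p)"
    define B where "B = (\<lambda>\<omega>. runmax (\<lambda>j. S (real a) h j \<omega>) q)"
    have split: "Gm n (real (a + b)) \<omega> \<le> A \<omega> + B \<omega>" if "\<omega> \<in> space M" for \<omega>
      using runmax_split[of "\<lambda>k. S 0 h k \<omega>" p q] Gm_eq[OF that] by (simp add: A_def B_def SA)
    define F where "F = (\<lambda>v. exp (\<alpha> * runmax (\<lambda>k. \<Sum>i<k. v i) p))"
    define G where "G = (\<lambda>v. exp (\<alpha> * runmax (\<lambda>j. \<Sum>i<j. v (p + i)) q))"
    have Fm: "F \<in> borel_measurable (PiM {..<p} (\<lambda>_. borel))"
      unfolding F_def
      by (intro meas_exp_comp measurable_runmax meas_sum_pi) auto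
    have Gm': "G \<in> borel_measurable (PiM {p..<p + q} (\<lambda>_. borel))"
      unfolding G_def
      by (intro meas_exp_comp measurable_runmax meas_sum_pi) auto
    have ind: "indep_var borel (\<lambda>\<omega>. F (\<lambda>i\<in>{..<p}. D 0 h i \<omega>)) borel (\<lambda>\<omega>. G (\<lambda>i\<in>{p..<p + q}. D 0 h i \<omega>))"
      by (rule block_indep[OF _ h0 _ Fm Gm']) auto
    have FA: "F (\<lambda>i\<in>{..<p}. D 0 h i \<omega>) = exp (\<alpha> * A \<omega>)" for \<omega>
    proof -
      have "(\<Sum>i<k. (\<lambda>i\<in>{..<p}. D 0 h i \<omega>) i) = S 0 h k \<omega>" if "k \<le> p" for k
        using that unfolding S_def by (intro sum.cong) auto
      then show ?thesis unfolding F_def A_def by (simp cong: runmax_cong)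
    qed
    have GB: "G (\<lambda>i\<in>{p..<p + q}. D 0 h i \<omega>) = exp (\<alpha> * B \<omega>)" for \<omega>
    proof -
      have "(\<Sum>i<j. (\<lambda>i\<in>{p..<p + q}. D 0 h i \<omega>) (p + i)) = S (real a) h j \<omega>" if "j \<le> q" for j
        using that unfolding S_def by (intro sum.cong) (auto simp: Dsh)
      then show ?thesis unfolding G_def B_def by (simp cong: runmax_cong)
    qed
    have eA: "exp (\<alpha> * A \<omega>) = runmax (\<lambda>k. exp (\<alpha> * S 0 h k \<omega>)) p" for \<omega>
      unfolding A_def using runmax_exp[of \<alpha>] apos by simp
    have eB: "exp (\<alpha> * B \<omega>) = runmax (\<lambda>j. exp (\<alpha> * S (real a) h j \<omega>)) q" for \<omega>
      unfolding B_def using runmax_exp[of \<alpha>] apos by simp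
    have intA: "integrable M (\<lambda>\<omega>. exp (\<alpha> * A \<omega>))"
      unfolding eA by (intro integrable_runmax S_exp_int[OF _ K hK]) simp
    have intB: "integrable M (\<lambda>\<omega>. exp (\<alpha> * B \<omega>))"
      unfolding eB by (intro integrable_runmax S_exp_int[OF _ K hK]) simp
    have intF: "integrable M (\<lambda>\<omega>. F (\<lambda>i\<in>{..<p}. D 0 h i \<omega>))" using intA by (simp add: FA)
    have intG: "integrable M (\<lambda>\<omega>. G (\<lambda>i\<in>{p..<p + q}. D 0 h i \<omega>))" using intB by (simp add: GB)
    have intAB: "integrable M (\<lambda>\<omega>. exp (\<alpha> * A \<omega>) * exp (\<alpha> * B \<omega>))"
      using indep_var_integrable[OF ind intF intG] by (simp add: FA GB)
    have EAB: "integral\<^sup>L M (\<lambda>\<omega>. exp (\<alpha> * A \<omega>) * exp (\<alpha> * B \<omega>))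
        = integral\<^sup>L M (\<lambda>\<omega>. exp (\<alpha> * A \<omega>)) * integral\<^sup>L M (\<lambda>\<omega>. exp (\<alpha> * B \<omega>))"
      using indep_var_lebesgue_integral[OF ind intF intG] by (simp add: FA GB)
    have EA: "integral\<^sup>L M (\<lambda>\<omega>. exp (\<alpha> * A \<omega>)) \<le> Fa"
      unfolding Fa_def
    proof (rule integral_mono[OF intA sup_int(1)])
      fix \<omega> assume \<omega>: "\<omega> \<in> space M"
      have "A \<omega> = Gm n (real a) \<omega>" unfolding A_def using Gm_nat[OF \<omega>, of n a] by (simp add: h_def p_def)
      also have "\<dots> \<le> running_sup X (real a) \<omega>" by (rule Gm_le[OF \<omega>]) simp
      finally show "exp (\<alpha> * A \<omega>) \<le> exp (\<alpha> * running_sup X (real a) \<omega>)" using apos by simp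
    qed
    have EB: "integral\<^sup>L M (\<lambda>\<omega>. exp (\<alpha> * B \<omega>)) \<le> CB b"
      unfolding eB using doob_nat(2)[of "real a" n b] by (simp add: h_def q_def)
    have EB0: "0 \<le> integral\<^sup>L M (\<lambda>\<omega>. exp (\<alpha> * B \<omega>))" by (intro integral_nonneg_AE) simp
    have intGm: "integrable M (\<lambda>\<omega>. exp (\<alpha> * Gm n (real (a + b)) \<omega>))"
    proof -
      have I1: "integrable M (\<lambda>\<omega>. runmax (\<lambda>j. exp (\<alpha> * S 0 (1 / 2 ^ n) j \<omega>)) ((a + b) * 2 ^ n))"
        using doob_nat(1)[of 0 n "a + b"] by simp
      have eq: "\<And>\<omega>. \<omega> \<in> space M \<Longrightarrow> exp (\<alpha> * Gm n (real (a + b)) \<omega>)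
          = runmax (\<lambda>j. exp (\<alpha> * S 0 (1 / 2 ^ n) j \<omega>)) ((a + b) * 2 ^ n)"
        by (rule expGm_nat)
      have "integrable M (\<lambda>\<omega>. exp (\<alpha> * Gm n (real (a + b)) \<omega>))
          = integrable M (\<lambda>\<omega>. runmax (\<lambda>j. exp (\<alpha> * S 0 (1 / 2 ^ n) j \<omega>)) ((a + b) * 2 ^ n))"
        by (intro Bochner_Integration.integrable_cong refl) (rule eq)
      with I1 show ?thesis by blast
    qed
    have "integral\<^sup>L M (\<lambda>\<omega>. exp (\<alpha> * Gm n (real (a + b)) \<omega>))
        \<le> integral\<^sup>L M (\<lambda>\<omega>. exp (\<alpha> * A \<omega>) * exp (\<alpha> * B \<omega>))"
    proof (rule integral_mono[OF intGm intAB])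
      fix \<omega> assume \<omega>: "\<omega> \<in> space M"
      have "\<alpha> * Gm n (real (a + b)) \<omega> \<le> \<alpha> * (A \<omega> + B \<omega>)"
        using split[OF \<omega>] apos by (intro mult_left_mono) auto
      then have "\<alpha> * Gm n (real (a + b)) \<omega> \<le> \<alpha> * A \<omega> + \<alpha> * B \<omega>"
        by (simp only: distrib_left)
      then show "exp (\<alpha> * Gm n (real (a + b)) \<omega>) \<le> exp (\<alpha> * A \<omega>) * exp (\<alpha> * B \<omega>)"
        by (simp add: exp_add[symmetric])
    qed
    also have "\<dots> \<le> Fa * CB b" unfolding EAB using EA EB EB0 Fa0 by (intro mult_mono) auto
    finally show ?thesis .
  qed
  have rm: "(\<lambda>\<omega>. exp (\<alpha> * running_sup X (real (a + b)) \<omega>)) \<in> borel_measurable M"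
    using rsup_meas[of "real (a + b)"] by (intro meas_exp_comp) simp
  have sm: "(\<lambda>\<omega>. exp (\<alpha> * Gm n (real (a + b)) \<omega>)) \<in> borel_measurable M" for n
    using Gm_meas[of "real (a + b)" n] by (intro meas_exp_comp) simp
  have lim: "(\<lambda>n. integral\<^sup>L M (\<lambda>\<omega>. exp (\<alpha> * Gm n (real (a + b)) \<omega>)))
      \<longlonglongrightarrow> integral\<^sup>L M (\<lambda>\<omega>. exp (\<alpha> * running_sup X (real (a + b)) \<omega>))"
  proof (rule integral_dominated_convergence[OF rm sm sup_int(1)])
    show "AE x in M. (\<lambda>n. exp (\<alpha> * Gm n (real (a + b)) x)) \<longlonglongrightarrow> exp (\<alpha> * running_sup X (real (a + b)) x)"
      by (intro AE_I2 tendsto_exp tendsto_mult_left Gm_lim) auto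
    show "AE x in M. norm (exp (\<alpha> * Gm n (real (a + b)) x)) \<le> exp (\<alpha> * running_sup X (real (a + b)) x)" for n
      using Gm_le[of _ "real (a + b)" n] apos by (intro AE_I2) (simp add: mult_left_mono)
  qed
  show ?thesis unfolding Fa_def[symmetric]
    by (rule LIMSEQ_le_const2[OF lim]) (use lev in auto)
qed

end

lemma harm_eq: "harm N = (\<Sum>j<N. 1 / (real j + 1))"
proof (induction N)
  case 0 then show ?case by (simp add: harm_def)
next
  case (Suc N) then show ?case by (simp add: harm_Suc inverse_eq_divide add.commute)
qed

lemma harm_sum_bound: "harm N / 3 \<le> (\<Sum>k<N. 1 / (real N + 2 - real k))"
proof -
  have "(\<Sum>k<N. 1 / (real N + 2 - real k)) = (\<Sum>i<N. 1 / (real (N - Suc i) + 3))"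
    by (intro sum.cong) (auto simp: of_nat_diff)
  also have "\<dots> = (\<Sum>j<N. 1 / (real j + 3))" by (rule sum.nat_diff_reindex)
  finally have e: "(\<Sum>k<N. 1 / (real N + 2 - real k)) = (\<Sum>j<N. 1 / (real j + 3))" .
  have "harm N / 3 = (\<Sum>j<N. 1 / (3 * (real j + 1)))" by (simp add: harm_eq sum_divide_distrib mult.commute)
  also have "\<dots> \<le> (\<Sum>j<N. 1 / (real j + 3))"
    by (intro sum_mono divide_left_mono) auto
  finally show ?thesis using e by simp
qed

lemma final_abstract:
  fixes g :: "real \<Rightarrow> real" and \<kappa> t :: real
  assumes mono: "mono g" and g1: "\<And>x. 1 \<le> g x"
    and sub: "\<And>a b. g (real (a + b)) \<le> g (real a) * (\<kappa> * (1 + real b))"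
    and \<kappa>: "\<kappa> > 0" and t: "t \<ge> 0"
  shows "((\<lambda>T. (LINT s:{0..<T - t}|lborel. g s) / (LINT s:{0..<T}|lborel. g s)) \<longlongrightarrow> 1) at_top"
proof -
  define I where "I = (\<lambda>a b. LINT s:{a..<b}|lborel. g s)"
  have gm[measurable]: "g \<in> borel_measurable lborel" using borel_measurable_mono[OF mono] by simp
  have fin: "emeasure lborel {a..<b} < \<infinity>" for a b :: real by (cases "a \<le> b") auto
  have sic: "set_integrable lborel {a..<b} (\<lambda>_. c :: real)" for a b c :: real
    unfolding set_integrable_def using fin[of a b] by (intro integrable_indicator) auto
  have si: "set_integrable lborel {a..<b} g" for a b
  proof (rule set_integrable_bound[OF sic[of a b "g b"]])
    show "set_borel_measurable lborel {a..<b} g" unfolding set_borel_measurable_def by measurable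
    show "AE x in lborel. x \<in> {a..<b} \<longrightarrow> norm (g x) \<le> norm (g b)"
    proof (rule AE_I2, rule impI)
      fix x assume "x \<in> {a..<b}"
      then have "g x \<le> g b" using mono by (auto simp: mono_def)
      moreover have "1 \<le> g x" "1 \<le> g b" using g1 by auto
      ultimately show "norm (g x) \<le> norm (g b)" by simp
    qed
  qed
  have split: "I a b = I a c + I c b" if "a \<le> c" "c \<le> b" for a b c
  proof -
    have e: "{a..<b} = {a..<c} \<union> {c..<b}" using that by auto
    have "I a b = (LINT s:({a..<c} \<union> {c..<b})|lborel. g s)" unfolding I_def by (simp only: e)
    also have "\<dots> = I a c + I c b" unfolding I_def by (rule set_integral_Un) (auto intro: si)
    finally show ?thesis .
  qed
  have up: "I a b \<le> (b - a) * g b" if "a \<le> b" for a b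
  proof -
    have "I a b \<le> (LINT s:{a..<b}|lborel. g b)" unfolding I_def
      by (rule set_integral_mono[OF si sic]) (use mono in \<open>auto simp: mono_def\<close>)
    also have "\<dots> = (b - a) * g b" using that fin[of a b] by (simp add: set_integral_const)
    finally show ?thesis .
  qed
  have lo: "(b - a) * g a \<le> I a b" if "a \<le> b" for a b
  proof -
    have "(LINT s:{a..<b}|lborel. g a) \<le> I a b" unfolding I_def
      by (rule set_integral_mono[OF sic si]) (use mono in \<open>auto simp: mono_def\<close>)
    moreover have "(LINT s:{a..<b}|lborel. g a) = (b - a) * g a" using that fin[of a b] by (simp add: set_integral_const)
    ultimately show ?thesis by simp
  qed
  have lo0: "0 \<le> I a b" if "a \<le> b" for a b
  proof -
    have "0 \<le> (b - a) * g a" using that g1[of a] by simp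
    then show ?thesis using lo[OF that] by linarith
  qed
  have losum: "(\<Sum>k<N. g (real k)) \<le> I 0 (real N)" for N
  proof (induction N)
    case 0 then show ?case using lo0[of 0 0] by simp
  next
    case (Suc N)
    have "I 0 (real (Suc N)) = I 0 (real N) + I (real N) (real N + 1)" using split[of 0 "real N" "real (Suc N)"] by (simp add: add.commute)
    moreover have "g (real N) \<le> I (real N) (real N + 1)" using lo[of "real N" "real N + 1"] by simp
    ultimately show ?case using Suc by simp
  qed
  have gk: "g (real (N + 1)) / (\<kappa> * (real N + 2 - real k)) \<le> g (real k)" if "k \<le> N" for N k
  proof -
    have A: "g (real (k + (N + 1 - k))) \<le> g (real k) * (\<kappa> * (1 + real (N + 1 - k)))" by (rule sub)
    have B1: "k + (N + 1 - k) = N + 1" using that by simp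
    have B2: "1 + real (N + 1 - k) = real N + 2 - real k" using that by (simp add: of_nat_diff)
    have "g (real (N + 1)) \<le> g (real k) * (\<kappa> * (real N + 2 - real k))" using A unfolding B1 B2 .
    moreover have "0 < \<kappa> * (real N + 2 - real k)" using that \<kappa> by simp
    ultimately show ?thesis by (simp add: pos_divide_le_eq)
  qed
  have sumlo: "g (real (N + 1)) * (\<Sum>k<N. 1 / (real N + 2 - real k)) / \<kappa> \<le> (\<Sum>k<N. g (real k))" for N
  proof -
    have "g (real (N + 1)) * (\<Sum>k<N. 1 / (real N + 2 - real k)) / \<kappa>
        = (\<Sum>k<N. g (real (N + 1)) / (\<kappa> * (real N + 2 - real k)))"
      by (simp add: sum_distrib_left sum_divide_distrib mult.commute)
    also have "\<dots> \<le> (\<Sum>k<N. g (real k))" by (intro sum_mono gk) simp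
    finally show ?thesis .
  qed
  define e where "e = (\<lambda>T. 1 - I 0 (T - t) / I 0 T)"
  define u where "u = (\<lambda>T::real. 3 * t * \<kappa> / harm (nat \<lfloor>T\<rfloor>))"
  have ev: "eventually (\<lambda>T. 0 \<le> e T \<and> e T \<le> u T) at_top"
  proof (rule eventually_mono[OF eventually_ge_at_top[of "t + 3"]])
    fix T assume T: "t + 3 \<le> T"
    define N where "N = nat \<lfloor>T\<rfloor>"
    have T0: "0 \<le> T" using T t by simp
    have fl3: "3 \<le> \<lfloor>T\<rfloor>" using T t by (simp add: le_floor_iff)
    have fl: "real N = of_int \<lfloor>T\<rfloor>" unfolding N_def using fl3 by simp
    have N1: "real N \<le> T" "T < real N + 1" using fl floor_correct[of T] by auto
    have "(3::nat) \<le> N" unfolding N_def using fl3 by linarith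
    then have N3: "N \<ge> 1" by simp
    have BTpos: "0 < I 0 T" using lo[of 0 T] g1[of 0] T t by (smt (verit) mult_le_cancel_left1)
    have Bsplit: "I 0 T = I 0 (T - t) + I (T - t) T" using split[of 0 "T - t" T] T t by simp
    have Iup: "I (T - t) T \<le> t * g (real (N + 1))"
    proof -
      have "I (T - t) T \<le> t * g T" using up[of "T - t" T] t by simp
      also have "\<dots> \<le> t * g (real (N + 1))" using N1 mono t by (intro mult_left_mono) (auto simp: mono_def)
      finally show ?thesis .
    qed
    have Ipos: "0 \<le> I (T - t) T" using lo0[of "T - t" T] t by simp
    define H where "H = (\<Sum>k<N. 1 / (real N + 2 - real k))"
    have hp: "0 < (harm N :: real)" using N3 by (intro harm_pos) simp
    have H3: "harm N / 3 \<le> H" unfolding H_def by (rule harm_sum_bound)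
    have gN: "1 \<le> g (real (N + 1))" by (rule g1)
    have BTlo: "g (real (N + 1)) * (harm N / 3) / \<kappa> \<le> I 0 T"
    proof -
      have "g (real (N + 1)) * (harm N / 3) / \<kappa> \<le> g (real (N + 1)) * H / \<kappa>"
        using H3 gN \<kappa> by (intro divide_right_mono mult_left_mono) auto
      also have "\<dots> \<le> (\<Sum>k<N. g (real k))" using sumlo[of N] unfolding H_def .
      also have "\<dots> \<le> I 0 (real N)" by (rule losum)
      also have "\<dots> \<le> I 0 T" using split[of 0 "real N" T] lo0[of "real N" T] N1 by simp
      finally show ?thesis .
    qed
    have eT: "e T = I (T - t) T / I 0 T" unfolding e_def using Bsplit BTpos by (simp add: field_simps)
    have "e T \<le> (t * g (real (N + 1))) / (g (real (N + 1)) * (harm N / 3) / \<kappa>)"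
      unfolding eT using Ipos Iup BTlo gN hp \<kappa> by (intro frac_le) auto
    also have "\<dots> = u T" unfolding u_def N_def[symmetric] using gN hp \<kappa> by (simp add: field_simps)
    finally show "0 \<le> e T \<and> e T \<le> u T" using eT Ipos BTpos by simp
  qed
  have ulim: "(u \<longlongrightarrow> 0) at_top"
  proof -
    have "filterlim (\<lambda>T::real. harm (nat \<lfloor>T\<rfloor>) :: real) at_top at_top"
      by (rule filterlim_compose[OF harm_at_top filterlim_compose[OF filterlim_nat_sequentially filterlim_floor_sequentially]])
    then have "filterlim (\<lambda>T::real. harm (nat \<lfloor>T\<rfloor>) :: real) at_infinity at_top"
      by (rule filterlim_at_top_imp_at_infinity)
    then show ?thesis unfolding u_def by (rule tendsto_divide_0[OF tendsto_const])
  qed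
  have elim: "(e \<longlongrightarrow> 0) at_top"
    by (rule tendsto_sandwich[OF _ _ tendsto_const ulim]) (use ev in \<open>auto elim: eventually_mono\<close>)
  then have "((\<lambda>T. 1 - e T) \<longlongrightarrow> 1 - 0) at_top" by (intro tendsto_diff tendsto_const)
  then show ?thesis unfolding e_def I_def by simp
qed

lemma cb_aux:
  fixes A e b x :: real
  assumes "0 \<le> A" "0 \<le> e" "0 \<le> b" "x \<le> A * b"
  shows "1 + x + e \<le> (1 + e + A) * (1 + b)"
proof -
  have "(1 + e + A) * (1 + b) = 1 + e + A + b + e * b + A * b" by (simp add: algebra_simps)
  moreover have "0 \<le> e * b" using assms by simp
  ultimately show ?thesis using assms by linarith
qed

context levy_ctx
begin

definition ff :: "real \<Rightarrow> real" where
  "ff s = integral\<^sup>L M (\<lambda>\<omega>. exp (\<alpha> * running_sup X s \<omega>))"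

lemma int_real: "s \<ge> 0 \<Longrightarrow> integrable M (\<lambda>\<omega>. exp (\<alpha> * running_sup X s \<omega>))"
proof -
  assume s: "s \<ge> 0"
  have sN: "s \<le> real (nat \<lceil>s\<rceil>)" by linarith
  show ?thesis
  proof (rule Bochner_Integration.integrable_bound[OF sup_int(1)[of "nat \<lceil>s\<rceil>"]])
    show "(\<lambda>\<omega>. exp (\<alpha> * running_sup X s \<omega>)) \<in> borel_measurable M"
      by (intro meas_exp_comp rsup_meas s)
    show "AE x in M. norm (exp (\<alpha> * running_sup X s x)) \<le> norm (exp (\<alpha> * running_sup X (real (nat \<lceil>s\<rceil>)) x))"
    proof (rule AE_I2)
      fix x assume x: "x \<in> space M"
      have "running_sup X s x \<le> running_sup X (real (nat \<lceil>s\<rceil>)) x" by (rule rsup_mono[OF x s sN])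
      then have "\<alpha> * running_sup X s x \<le> \<alpha> * running_sup X (real (nat \<lceil>s\<rceil>)) x" using apos by (intro mult_left_mono) auto
      then show "norm (exp (\<alpha> * running_sup X s x)) \<le> norm (exp (\<alpha> * running_sup X (real (nat \<lceil>s\<rceil>)) x))" by simp
    qed
  qed
qed

lemma ff_mono: "0 \<le> s \<Longrightarrow> s \<le> t \<Longrightarrow> ff s \<le> ff t"
  unfolding ff_def
proof (rule integral_mono[OF int_real int_real])
  fix x assume s: "0 \<le> s" and st: "s \<le> t" and x: "x \<in> space M"
  then have "running_sup X s x \<le> running_sup X t x" by (intro rsup_mono) auto
  then have "\<alpha> * running_sup X s x \<le> \<alpha> * running_sup X t x" using apos by (intro mult_left_mono) auto
  then show "exp (\<alpha> * running_sup X s x) \<le> exp (\<alpha> * running_sup X t x)" by simp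
qed auto

lemma ff_ge1: "0 \<le> s \<Longrightarrow> 1 \<le> ff s"
proof -
  assume s: "0 \<le> s"
  have "integral\<^sup>L M (\<lambda>\<omega>. 1::real) \<le> ff s" unfolding ff_def
  proof (rule integral_mono[OF _ int_real[OF s]])
    fix x assume x: "x \<in> space M"
    have "0 \<le> running_sup X s x" by (rule rsup_nonneg[OF x s])
    then show "1 \<le> exp (\<alpha> * running_sup X s x)" using apos by simp
  qed simp
  then show ?thesis by (simp add: prob_space)
qed

definition gg :: "real \<Rightarrow> real" where "gg s = ff (max s 0)"

definition kap :: real where "kap = (1 + exp (-1) + \<alpha> * \<bar>mu\<bar>) / (1 - exp (-1))"

lemma CB_le: "CB b \<le> kap * (1 + real b)"
proof -
  have e: "0 < 1 - exp (-1::real)" using exp_neg1_lt by simp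
  have x: "\<alpha> * (real b * mu) \<le> (\<alpha> * \<bar>mu\<bar>) * real b"
  proof -
    have "real b * mu \<le> real b * \<bar>mu\<bar>" by (intro mult_left_mono) auto
    then have "\<alpha> * (real b * mu) \<le> \<alpha> * (real b * \<bar>mu\<bar>)" using apos by (intro mult_left_mono) auto
    then show ?thesis by (simp add: mult_ac)
  qed
  have "1 + \<alpha> * (real b * mu) + exp (-1) \<le> (1 + exp (-1) + \<alpha> * \<bar>mu\<bar>) * (1 + real b)"
    by (rule cb_aux[OF _ _ _ x]) (use apos in auto)
  then have "(1 + \<alpha> * (real b * mu) + exp (-1)) / (1 - exp (-1))
      \<le> (1 + exp (-1) + \<alpha> * \<bar>mu\<bar>) * (1 + real b) / (1 - exp (-1))"
    using e by (intro divide_right_mono) auto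
  then show ?thesis unfolding CB_def kap_def by (simp add: field_simps)
qed

lemma kap_pos: "kap > 0"
proof -
  have e: "0 < 1 - exp (-1::real)" using exp_neg1_lt by simp
  have "0 < 1 + exp (-1) + \<alpha> * \<bar>mu\<bar>" using apos by (simp add: add_pos_nonneg)
  then show ?thesis unfolding kap_def using e by simp
qed

lemma gg_mono: "mono gg"
  unfolding gg_def by (intro monoI ff_mono) auto

lemma gg_ge1: "1 \<le> gg x"
  unfolding gg_def by (intro ff_ge1) auto

lemma gg_sub: "gg (real (a + b)) \<le> gg (real a) * (kap * (1 + real b))"
proof -
  have "gg (real (a + b)) = ff (real (a + b))" by (simp add: gg_def)
  also have "\<dots> \<le> ff (real a) * CB b" unfolding ff_def by (rule sup_sub)
  also have "\<dots> \<le> ff (real a) * (kap * (1 + real b))"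
    using CB_le[of b] ff_ge1[of "real a"] by (intro mult_left_mono) auto
  also have "ff (real a) = gg (real a)" by (simp add: gg_def)
  finally show ?thesis .
qed

lemma psi0: "levy_psi M X \<alpha> = 0"
  unfolding levy_psi_def using E1 by simp

lemma B_eq: "levy_B M X \<alpha> T = (LINT s:{0..<T}|lborel. gg s)"
  unfolding levy_B_def psi0
  by (rule set_lebesgue_integral_cong) (auto simp: gg_def ff_def)

lemma main:
  assumes t: "t \<ge> 0"
  shows "((\<lambda>T. levy_B M X \<alpha> (T - t) / levy_B M X \<alpha> T) \<longlongrightarrow> 1) at_top"
  unfolding B_eq
  by (rule final_abstract[OF gg_mono gg_ge1 gg_sub kap_pos t])

end

theorem lemma7p1:
  fixes M :: "'a measure" and X :: "real \<Rightarrow> 'a \<Rightarrow> real" and \<alpha> t :: real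
  assumes "levy_process M X"
    and "\<alpha> > 0"
    and "integrable M (\<lambda>\<omega>. exp (\<alpha> * X 1 \<omega>))"
    and "integral\<^sup>L M (\<lambda>\<omega>. exp (\<alpha> * X 1 \<omega>)) = 1"
    and "integrable M (\<lambda>\<omega>. X 1 \<omega> * exp (\<alpha> * X 1 \<omega>))"
    and "t \<ge> 0"
  shows "((\<lambda>T. levy_B M X \<alpha> (T - t) / levy_B M X \<alpha> T) \<longlongrightarrow> 1) at_top"
proof -
  interpret L: levy_ctx M X \<alpha>
    by (rule levy_ctx.intro) (fact assms)+
  show ?thesis by (rule L.main[OF assms(6)])
qed

end
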